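(* In the abstract boundary problem setting described in the context, let $A$ be a self-adjoint operator in $H_0$ with $T\subset A\subset T^*$, $\mathcal D(A)=\operatorname{Ker}\gamma_0$, and such that $A$ has a bounded everywhere defined inverse. Then $\Gamma_0$ restricts to a topological isomorphism $\operatorname{Ker}T^*\to K'$, and $T^*\oplus\Gamma_0:\mathcal D(T^* )\to H_0\oplus K'$ is a topological isomorphism (with the graph topology on $\mathcal D(T^* )$).
   Context: Inner products are linear in the first argument and conjugate-linear in the second. Let $H_0$ be a separable Hilbert space with inner product $\langle\cdot,\cdot\rangle$, let $T$ be a closed densely defined symmetric operator in $H_0$ with adjoint $T^*$, and equip $\mathcal D(T^* )$ with the graph norm. Let $H_1\subset H_0$ be a dense subspace which is a Hilbert space in its own right with bounded inclusion $H_1\to H_0$. Let $K^\partial$ be a separable Hilbert space with inner product $\langle\cdot,\cdot\rangle_\partial$ and $K\subset K^\partial$ a dense subspace which is a Hilbert space in its own right with bounded inclusion. Let $K'$ be the space of continuous anti-linear functionals on $K$ (a Hilbert space with the dual norm); $K^\partial$ is regarded as a dense subspace of $K'$ via $y\mapsto(x\mapsto\langle y,x\rangle_\partial)$, so $K\subset K^\partial\subset K'$. For $y\in K'$, $x\in K$ put $\langle y,x\rangle_{K',K}=y(x)$ and $\langle x,y\rangle_{K,K'}=\overline{y(x)}$; these agree with $\langle\cdot,\cdot\rangle_\partial$ when $y\in K^\partial$. Standing assumptions: $H_1\subset\mathcal D(T^* )$ and $H_1$ is dense in $\mathcal D(T^* )$ in the graph norm; $T^*|_{H_1}:H_1\to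 H_0$ is bounded; $\gamma_0,\gamma_1:H_1\to K$ are bounded linear operators such that $\gamma=\gamma_0\oplus\gamma_1:H_1\to K\oplus K$ is surjective; $\operatorname{Ker}\gamma$ is dense in $H_0$ and $\mathcal D(T)=\operatorname{Ker}\gamma$; and the Lagrange identity $\langle T^*u,v\rangle-\langle u,T^*v\rangle=\langle\gamma_1u,\gamma_0v\rangle_\partial-\langle\gamma_0u,\gamma_1v\rangle_\partial$ holds for all $u,v\in H_1$. $\Gamma_0,\Gamma_1:\mathcal D(T^* )\to K'$ denote the (existing, unique) continuous extensions of $\gamma_0,\gamma_1$; they satisfy $\langle T^*u,v\rangle-\langle u,T^*v\rangle=\langle\Gamma_1u,\Gamma_0v\rangle_{K',K}-\langle\Gamma_0u,\Gamma_1v\rangle_{K',K}$ for $u\in\mathcal D(T^* )$, $v\in H_1$. *)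

theory Defs
  imports "HOL-Analysis.Analysis"
begin

text \<open>HOL has no complex vector spaces; we introduce a class of complex inner product
spaces (inner product linear in the first, conjugate-linear in the second argument),
whose norm is the one induced by the inner product. A complex Hilbert space is then
a type of class \<open>{complex_inner, complete_space}\<close>.\<close>

class complex_inner = real_normed_vector +
  fixes scaleC :: "complex \<Rightarrow> 'a \<Rightarrow> 'a" (infixr "*\<^sub>C" 75)
    and cinner :: "'a \<Rightarrow> 'a \<Rightarrow> complex"
  assumes scaleC_of_real: "scaleC (complex_of_real r) x = scaleR r x"
    and scaleC_add_right: "scaleC a (x + y) = scaleC a x + scaleC a y"
    and scaleC_add_left: "scaleC (a + b) x = scaleC a x + scaleC b x"
    and scaleC_scaleC: "scaleC a (scaleC b x) = scaleC (a * b) x"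
    and scaleC_one: "scaleC 1 x = x"
    and cinner_add_left: "cinner (x + y) z = cinner x z + cinner y z"
    and cinner_scaleC_left: "cinner (scaleC a x) y = a * cinner x y"
    and cinner_commute: "cinner y x = cnj (cinner x y)"
    and cinner_pos: "x \<noteq> 0 \<Longrightarrow> 0 < Re (cinner x x)"
    and norm_cinner: "norm x = sqrt (Re (cinner x x))"

definition csubspace :: "'a::complex_inner set \<Rightarrow> bool" where
  "csubspace S \<longleftrightarrow> 0 \<in> S \<and> (\<forall>x\<in>S. \<forall>y\<in>S. x + y \<in> S) \<and> (\<forall>c. \<forall>x\<in>S. c *\<^sub>C x \<in> S)"

definition ip_norm :: "('a \<Rightarrow> 'a \<Rightarrow> complex) \<Rightarrow> 'a \<Rightarrow> real" where
  "ip_norm ip x = sqrt (Re (ip x x))"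

text \<open>\<open>V\<close> is a complex subspace which is a Hilbert space in its own right with
inner product \<open>ip\<close> (only its values on \<open>V\<close> matter).\<close>
definition own_hilbert :: "'a::complex_inner set \<Rightarrow> ('a \<Rightarrow> 'a \<Rightarrow> complex) \<Rightarrow> bool" where
  "own_hilbert V ip \<longleftrightarrow> csubspace V
     \<and> (\<forall>x\<in>V. \<forall>y\<in>V. \<forall>z\<in>V. ip (x + y) z = ip x z + ip y z)
     \<and> (\<forall>c. \<forall>x\<in>V. \<forall>y\<in>V. ip (c *\<^sub>C x) y = c * ip x y)
     \<and> (\<forall>x\<in>V. \<forall>y\<in>V. ip y x = cnj (ip x y))
     \<and> (\<forall>x\<in>V. x \<noteq> 0 \<longrightarrow> 0 < Re (ip x x))
     \<and> (\<forall>X. (\<forall>n. X n \<in> V) \<and>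
             (\<forall>e>0. \<exists>N. \<forall>m\<ge>N. \<forall>n\<ge>N. ip_norm ip (X m - X n) < e)
          \<longrightarrow> (\<exists>l\<in>V. (\<lambda>n. ip_norm ip (X n - l)) \<longlonglongrightarrow> 0))"

definition lin_on :: "'a::complex_inner set \<Rightarrow> ('a \<Rightarrow> 'b::complex_inner) \<Rightarrow> bool" where
  "lin_on D f \<longleftrightarrow> csubspace D \<and> (\<forall>x\<in>D. \<forall>y\<in>D. f (x + y) = f x + f y)
     \<and> (\<forall>c. \<forall>x\<in>D. f (c *\<^sub>C x) = c *\<^sub>C f x)"

text \<open>An operator is a pair (domain \<open>D\<close>, map \<open>T\<close>); the map is only relevant on \<open>D\<close>.\<close>

definition adj_dom :: "'a::complex_inner set \<Rightarrow> ('a \<Rightarrow> 'a) \<Rightarrow> 'a set" where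
  "adj_dom D T = {v. \<exists>w. \<forall>u\<in>D. cinner (T u) v = cinner u w}"

definition adj :: "'a::complex_inner set \<Rightarrow> ('a \<Rightarrow> 'a) \<Rightarrow> 'a \<Rightarrow> 'a" where
  "adj D T v = (SOME w. \<forall>u\<in>D. cinner (T u) v = cinner u w)"

definition closed_op :: "'a::complex_inner set \<Rightarrow> ('a \<Rightarrow> 'a) \<Rightarrow> bool" where
  "closed_op D T \<longleftrightarrow> closed {(u, T u) | u. u \<in> D}"

definition symmetric_op :: "'a::complex_inner set \<Rightarrow> ('a \<Rightarrow> 'a) \<Rightarrow> bool" where
  "symmetric_op D T \<longleftrightarrow> (\<forall>u\<in>D. \<forall>v\<in>D. cinner (T u) v = cinner u (T v))"

definition self_adjoint_op :: "'a::complex_inner set \<Rightarrow> ('a \<Rightarrow> 'a) \<Rightarrow> bool" where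
  "self_adjoint_op D T \<longleftrightarrow> lin_on D T \<and> closure D = UNIV \<and>
     adj_dom D T = D \<and> (\<forall>u\<in>D. adj D T u = T u)"

definition op_le :: "'a set \<Rightarrow> ('a \<Rightarrow> 'b) \<Rightarrow> 'a set \<Rightarrow> ('a \<Rightarrow> 'b) \<Rightarrow> bool" where
  "op_le DS S DR R \<longleftrightarrow> DS \<subseteq> DR \<and> (\<forall>u\<in>DS. S u = R u)"

definition graph_norm :: "'a::complex_inner set \<Rightarrow> ('a \<Rightarrow> 'a) \<Rightarrow> 'a \<Rightarrow> real" where
  "graph_norm D T v = sqrt ((norm v)\<^sup>2 + (norm (adj D T v))\<^sup>2)"

text \<open>Elements of \<open>K'\<close> are represented by functions \<open>'k \<Rightarrow> complex\<close> that are
antilinear and bounded on \<open>K\<close> (w.r.t. the \<open>K\<close>-norm) and vanish outside \<open>K\<close>.\<close>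
definition antidual :: "'k::complex_inner set \<Rightarrow> ('k \<Rightarrow> 'k \<Rightarrow> complex) \<Rightarrow> ('k \<Rightarrow> complex) set" where
  "antidual K ipK = {f. (\<forall>x\<in>K. \<forall>y\<in>K. f (x + y) = f x + f y)
     \<and> (\<forall>c. \<forall>x\<in>K. f (c *\<^sub>C x) = cnj c * f x)
     \<and> (\<exists>C. \<forall>x\<in>K. cmod (f x) \<le> C * ip_norm ipK x)
     \<and> (\<forall>x. x \<notin> K \<longrightarrow> f x = 0)}"

definition dual_norm :: "'k::complex_inner set \<Rightarrow> ('k \<Rightarrow> 'k \<Rightarrow> complex) \<Rightarrow> ('k \<Rightarrow> complex) \<Rightarrow> real" where
  "dual_norm K ipK f = (SUP x\<in>{x\<in>K. ip_norm ipK x \<le> 1}. cmod (f x))"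

text \<open>The embedding \<open>K\<^sup>\<partial> \<rightarrow> K'\<close>, \<open>y \<mapsto> (x \<mapsto> \<langle>y,x\<rangle>\<^sub>\<partial>)\<close>.\<close>
definition emb :: "'k::complex_inner set \<Rightarrow> 'k \<Rightarrow> ('k \<Rightarrow> complex)" where
  "emb K y = (\<lambda>x. if x \<in> K then cinner y x else 0)"

definition top_iso :: "('a \<Rightarrow> 'b) \<Rightarrow> 'a set \<Rightarrow> 'b set \<Rightarrow> ('a \<Rightarrow> real) \<Rightarrow> ('b \<Rightarrow> real) \<Rightarrow> bool" where
  "top_iso f X Y nX nY \<longleftrightarrow> bij_betw f X Y
     \<and> (\<exists>C. \<forall>x\<in>X. nY (f x) \<le> C * nX x)
     \<and> (\<exists>C. \<forall>x\<in>X. nX x \<le> C * nY (f x))"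

end

theory Submission
  imports Defs
begin

lemma scaleC_minus1: "(-1::complex) *\<^sub>C (x::'a::complex_inner) = - x"
proof -
  have "scaleC (complex_of_real (-1)) x = scaleR (-1) x" by (rule scaleC_of_real)
  then show ?thesis by simp
qed

lemma scaleC_zero_right: "c *\<^sub>C (0::'a::complex_inner) = 0"
proof -
  have "c *\<^sub>C (0::'a) = c *\<^sub>C 0 + c *\<^sub>C 0" by (metis add.right_neutral scaleC_add_right)
  then show ?thesis by simp
qed

lemma scaleC_zero_left: "(0::complex) *\<^sub>C (x::'a::complex_inner) = 0"
proof -
  have "scaleC (complex_of_real 0) x = scaleR 0 x" by (rule scaleC_of_real)
  then show ?thesis by simp
qed

lemma scaleC_minus_right: "c *\<^sub>C (- (x::'a::complex_inner)) = - (c *\<^sub>C x)"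
proof -
  have "c *\<^sub>C (- x) = c *\<^sub>C ((-1) *\<^sub>C x)" by (simp only: scaleC_minus1)
  also have "\<dots> = (-1) *\<^sub>C (c *\<^sub>C x)" by (simp only: scaleC_scaleC mult.commute)
  also have "\<dots> = - (c *\<^sub>C x)" by (simp only: scaleC_minus1)
  finally show ?thesis .
qed

lemma scaleC_diff_right: "c *\<^sub>C ((x::'a::complex_inner) - y) = c *\<^sub>C x - c *\<^sub>C y"
  by (simp only: diff_conv_add_uminus scaleC_add_right scaleC_minus_right)

lemma csubspace_minus: "csubspace V \<Longrightarrow> x \<in> V \<Longrightarrow> - x \<in> V"
  unfolding csubspace_def by (metis scaleC_minus1)

lemma csubspace_diff: "csubspace V \<Longrightarrow> x \<in> V \<Longrightarrow> y \<in> V \<Longrightarrow> x - y \<in> V"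
  by (metis csubspace_def csubspace_minus diff_conv_add_uminus)

lemma csubspace_add: "csubspace V \<Longrightarrow> x \<in> V \<Longrightarrow> y \<in> V \<Longrightarrow> x + y \<in> V"
  unfolding csubspace_def by blast

lemma csubspace_scale: "csubspace V \<Longrightarrow> x \<in> V \<Longrightarrow> c *\<^sub>C x \<in> V"
  unfolding csubspace_def by blast

lemma csubspace_zero: "csubspace V \<Longrightarrow> 0 \<in> V"
  unfolding csubspace_def by blast

lemma csubspace_UNIV: "csubspace UNIV"
  unfolding csubspace_def by blast

locale sesq =
  fixes V :: "'a::complex_inner set" and ip :: "'a \<Rightarrow> 'a \<Rightarrow> complex"
  assumes sub: "csubspace V"
    and add_l: "x\<in>V \<Longrightarrow> y\<in>V \<Longrightarrow> z\<in>V \<Longrightarrow> ip (x+y) z = ip x z + ip y z"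
    and scl_l: "x\<in>V \<Longrightarrow> y\<in>V \<Longrightarrow> ip (c *\<^sub>C x) y = c * ip x y"
    and herm: "x\<in>V \<Longrightarrow> y\<in>V \<Longrightarrow> ip y x = cnj (ip x y)"
    and pos: "x\<in>V \<Longrightarrow> x\<noteq>0 \<Longrightarrow> 0 < Re (ip x x)"
begin

abbreviation nm where "nm \<equiv> ip_norm ip"

lemma V0: "0 \<in> V" using sub csubspace_zero by blast
lemma Vadd: "x \<in> V \<Longrightarrow> y \<in> V \<Longrightarrow> x + y \<in> V" using sub csubspace_add by blast
lemma Vdiff: "x \<in> V \<Longrightarrow> y \<in> V \<Longrightarrow> x - y \<in> V" using sub csubspace_diff by blast
lemma Vminus: "y \<in> V \<Longrightarrow> - y \<in> V" using sub csubspace_minus by blast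
lemma Vscale: "x \<in> V \<Longrightarrow> c *\<^sub>C x \<in> V" using sub csubspace_scale by blast

lemma add_r: "x\<in>V \<Longrightarrow> y\<in>V \<Longrightarrow> z\<in>V \<Longrightarrow> ip x (y+z) = ip x y + ip x z"
proof -
  assume a: "x\<in>V" "y\<in>V" "z\<in>V"
  have "ip x (y+z) = cnj (ip (y+z) x)" using herm[of "y+z" x] a Vadd by simp
  also have "\<dots> = cnj (ip y x) + cnj (ip z x)" using add_l a by simp
  also have "\<dots> = ip x y + ip x z" using herm[of y x] herm[of z x] a by simp
  finally show ?thesis .
qed

lemma scl_r: "x\<in>V \<Longrightarrow> y\<in>V \<Longrightarrow> ip x (c *\<^sub>C y) = cnj c * ip x y"
proof -
  assume a: "x\<in>V" "y\<in>V"
  have "ip x (c *\<^sub>C y) = cnj (ip (c *\<^sub>C y) x)" using herm[of "c *\<^sub>C y" x] a Vscale by simp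
  also have "\<dots> = cnj c * cnj (ip y x)" using scl_l a by simp
  also have "\<dots> = cnj c * ip x y" using herm[of y x] a by simp
  finally show ?thesis .
qed

lemma zero_l: "y \<in> V \<Longrightarrow> ip 0 y = 0"
  using add_l[of 0 0 y] V0 by simp

lemma zero_r: "y \<in> V \<Longrightarrow> ip y 0 = 0"
  using herm[of 0 y] zero_l V0 by simp

lemma minus_l: "x\<in>V \<Longrightarrow> y\<in>V \<Longrightarrow> ip (- x) y = - ip x y"
  using scl_l[of x y "-1"] by (simp add: scaleC_minus1)

lemma minus_r: "x\<in>V \<Longrightarrow> y\<in>V \<Longrightarrow> ip x (- y) = - ip x y"
  using scl_r[of x y "-1"] by (simp add: scaleC_minus1)

lemma diff_l: "x\<in>V \<Longrightarrow> y\<in>V \<Longrightarrow> z\<in>V \<Longrightarrow> ip (x - y) z = ip x z - ip y z"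
proof -
  assume a: "x\<in>V" "y\<in>V" "z\<in>V"
  have "ip (x - y) z = ip (x + - y) z" by (simp only: diff_conv_add_uminus)
  also have "\<dots> = ip x z + ip (- y) z" using add_l a Vminus by blast
  also have "\<dots> = ip x z - ip y z" using minus_l a by simp
  finally show ?thesis .
qed

lemma diff_r: "x\<in>V \<Longrightarrow> y\<in>V \<Longrightarrow> z\<in>V \<Longrightarrow> ip x (y - z) = ip x y - ip x z"
proof -
  assume a: "x\<in>V" "y\<in>V" "z\<in>V"
  have "ip x (y - z) = ip x (y + - z)" by (simp only: diff_conv_add_uminus)
  also have "\<dots> = ip x y + ip x (- z)" using add_r a Vminus by blast
  also have "\<dots> = ip x y - ip x z" using minus_r a by simp
  finally show ?thesis .
qed

lemma self_real: "x \<in> V \<Longrightarrow> Im (ip x x) = 0"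
proof -
  assume x: "x \<in> V"
  have h: "ip x x = cnj (ip x x)" using herm[OF x x] .
  have "Im (ip x x) = Im (cnj (ip x x))" using arg_cong[OF h, of Im] .
  then show ?thesis by simp
qed

lemma self_nonneg: "x \<in> V \<Longrightarrow> 0 \<le> Re (ip x x)"
proof (cases "x = 0")
  case True then show ?thesis using zero_l[OF V0] by simp
next
  case False
  assume "x \<in> V"
  then show ?thesis using pos[of x] False by simp
qed

lemma self_eq: "x \<in> V \<Longrightarrow> ip x x = complex_of_real ((nm x)\<^sup>2)"
  using self_real[of x] self_nonneg[of x] unfolding ip_norm_def
  by (simp add: complex_eq_iff)

lemma nm_nonneg: "x \<in> V \<Longrightarrow> 0 \<le> nm x" unfolding ip_norm_def using self_nonneg by simp

lemma nm_sq: "x \<in> V \<Longrightarrow> (nm x)\<^sup>2 = Re (ip x x)"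
  unfolding ip_norm_def using self_nonneg[of x] by simp

lemma nm_zero: "nm 0 = 0" unfolding ip_norm_def using zero_l V0 by simp

lemma nm_eq0: "x \<in> V \<Longrightarrow> nm x = 0 \<longleftrightarrow> x = 0"
proof
  assume x: "x \<in> V" and n: "nm x = 0"
  show "x = 0"
  proof (rule ccontr)
    assume "x \<noteq> 0"
    then have "0 < Re (ip x x)" using pos x by blast
    then have "0 < nm x" unfolding ip_norm_def by simp
    then show False using n by simp
  qed
next
  assume "x = 0" then show "nm x = 0" using nm_zero by simp
qed

lemma nm_scale: "x \<in> V \<Longrightarrow> nm (c *\<^sub>C x) = cmod c * nm x"
proof -
  assume x: "x \<in> V"
  have "ip (c *\<^sub>C x) (c *\<^sub>C x) = c * cnj c * ip x x"
    using x by (simp add: scl_l scl_r Vscale)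
  also have "c * cnj c = complex_of_real ((cmod c)\<^sup>2)" by (rule complex_norm_square[symmetric])
  finally have "Re (ip (c *\<^sub>C x) (c *\<^sub>C x)) = (cmod c)\<^sup>2 * Re (ip x x)" by simp
  then show ?thesis unfolding ip_norm_def by (simp add: real_sqrt_mult)
qed

lemma nm_minus: "x \<in> V \<Longrightarrow> nm (- x) = nm x"
  using nm_scale[of x "-1"] by (simp add: scaleC_minus1)

lemma nm_commute: "x \<in> V \<Longrightarrow> y \<in> V \<Longrightarrow> nm (x - y) = nm (y - x)"
  using nm_minus[of "y - x"] Vdiff by simp

lemma expand: "x\<in>V \<Longrightarrow> y\<in>V \<Longrightarrow>
   ip (x + c *\<^sub>C y) (x + c *\<^sub>C y) = ip x x + cnj c * ip x y + c * cnj (ip x y) + c * cnj c * ip y y"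
  by (simp add: add_l add_r scl_l scl_r Vscale Vadd herm[of x y] algebra_simps)

lemma cauchy_schwarz: "x\<in>V \<Longrightarrow> y\<in>V \<Longrightarrow> cmod (ip x y) \<le> nm x * nm y"
proof -
  assume x: "x \<in> V" and y: "y \<in> V"
  show ?thesis
  proof (cases "y = 0")
    case True then show ?thesis using zero_r x nm_zero by simp
  next
    case False
    define r where "r = Re (ip y y)"
    have r: "r > 0" using pos y False r_def by simp
    have iyy: "ip y y = complex_of_real r" using self_eq[OF y] nm_sq[OF y] r_def by simp
    define a where "a = ip x y"
    define c where "c = - a / complex_of_real r"
    have "0 \<le> Re (ip (x + c *\<^sub>C y) (x + c *\<^sub>C y))" using self_nonneg Vadd Vscale x y by blast
    also have "ip (x + c *\<^sub>C y) (x + c *\<^sub>C y) = ip x x - complex_of_real ((cmod a)\<^sup>2 / r)"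
    proof -
      have e: "ip (x + c *\<^sub>C y) (x + c *\<^sub>C y) = ip x x + cnj c * a + c * cnj a + c * cnj c * complex_of_real r"
        using expand[OF x y, of c] iyy a_def by simp
      have aa: "a * cnj a = complex_of_real ((cmod a)\<^sup>2)" by (rule complex_norm_square[symmetric])
      have cc: "cnj c = - cnj a / complex_of_real r" using c_def by simp
      have rr: "complex_of_real r \<noteq> 0" using r by simp
      have d: "complex_of_real ((cmod a)\<^sup>2 / r) = complex_of_real ((cmod a)\<^sup>2) / complex_of_real r"
        by simp
      have "cnj c * a = - complex_of_real ((cmod a)\<^sup>2 / r)"
        unfolding cc d aa[symmetric] using rr by (simp add: field_simps)
      moreover have "c * cnj a = - complex_of_real ((cmod a)\<^sup>2 / r)"
        unfolding c_def d aa[symmetric] using rr by (simp add: field_simps)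
      moreover have "c * cnj c * complex_of_real r = complex_of_real ((cmod a)\<^sup>2 / r)"
        unfolding cc c_def d aa[symmetric] using rr by (simp add: field_simps)
      ultimately show ?thesis using e by simp
    qed
    finally have "(cmod a)\<^sup>2 / r \<le> Re (ip x x)" by simp
    then have "(cmod a)\<^sup>2 \<le> Re (ip x x) * r" using r by (simp add: field_simps)
    also have "\<dots> = (nm x * nm y)\<^sup>2" using nm_sq x y r_def by (simp add: power_mult_distrib)
    finally have "(cmod a)\<^sup>2 \<le> (nm x * nm y)\<^sup>2" .
    then show ?thesis unfolding a_def
      using nm_nonneg[OF x] nm_nonneg[OF y] by (meson mult_nonneg_nonneg power2_le_imp_le)
  qed
qed

lemma triangle: "x\<in>V \<Longrightarrow> y\<in>V \<Longrightarrow> nm (x + y) \<le> nm x + nm y"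
proof -
  assume x: "x \<in> V" and y: "y \<in> V"
  have "ip (x + y) (x + y) = ip x x + ip x y + cnj (ip x y) + ip y y"
    using x y by (simp add: add_l add_r Vadd herm[of x y])
  then have "(nm (x+y))\<^sup>2 = (nm x)\<^sup>2 + 2 * Re (ip x y) + (nm y)\<^sup>2"
    using nm_sq x y Vadd by simp
  also have "\<dots> \<le> (nm x)\<^sup>2 + 2 * (nm x * nm y) + (nm y)\<^sup>2"
    using cauchy_schwarz[OF x y] complex_Re_le_cmod[of "ip x y"] by linarith
  also have "\<dots> = (nm x + nm y)\<^sup>2" by (simp add: power2_sum)
  finally show ?thesis using nm_nonneg[OF x] nm_nonneg[OF y] by (meson add_nonneg_nonneg power2_le_imp_le)
qed

lemma triangle_diff: "x\<in>V \<Longrightarrow> y\<in>V \<Longrightarrow> z \<in> V \<Longrightarrow> nm (x - z) \<le> nm (x - y) + nm (y - z)"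
  using triangle[of "x - y" "y - z"] Vdiff by simp

end

lemma sesq_UNIV: "sesq UNIV (cinner :: 'a::complex_inner \<Rightarrow> _)"
  unfolding sesq_def
  by (simp add: csubspace_UNIV cinner_add_left cinner_scaleC_left cinner_pos cinner_commute[symmetric])

lemma own_hilbert_sesq: "own_hilbert V ip \<Longrightarrow> sesq V ip"
proof -
  assume h: "own_hilbert V ip"
  note * = h[unfolded own_hilbert_def]
  show ?thesis
  proof
    show "csubspace V" using *[THEN conjunct1] .
    show "ip (x + y) z = ip x z + ip y z" if "x\<in>V" "y\<in>V" "z\<in>V" for x y z
      using *[THEN conjunct2, THEN conjunct1] that by blast
    show "ip (c *\<^sub>C x) y = c * ip x y" if "x\<in>V" "y\<in>V" for x y c
      using *[THEN conjunct2, THEN conjunct2, THEN conjunct1] that by blast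
    show "ip y x = cnj (ip x y)" if "x\<in>V" "y\<in>V" for x y
      using *[THEN conjunct2, THEN conjunct2, THEN conjunct2, THEN conjunct1] that by blast
    show "0 < Re (ip x x)" if "x\<in>V" "x \<noteq> 0" for x
      using *[THEN conjunct2, THEN conjunct2, THEN conjunct2, THEN conjunct2, THEN conjunct1] that by blast
  qed
qed

lemma own_hilbert_complete: "own_hilbert V ip \<Longrightarrow> (\<forall>n. X n \<in> V) \<Longrightarrow>
   (\<forall>e>0. \<exists>N. \<forall>m\<ge>N. \<forall>n\<ge>N. ip_norm ip (X m - X n) < e) \<Longrightarrow>
   \<exists>l\<in>V. (\<lambda>n. ip_norm ip (X n - l)) \<longlonglongrightarrow> 0"
proof -
  assume h: "own_hilbert V ip" and a: "\<forall>n. X n \<in> V"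
     "\<forall>e>0. \<exists>N. \<forall>m\<ge>N. \<forall>n\<ge>N. ip_norm ip (X m - X n) < e"
  have c: "\<forall>X. (\<forall>n. X n \<in> V) \<and>
             (\<forall>e>0. \<exists>N. \<forall>m\<ge>N. \<forall>n\<ge>N. ip_norm ip (X m - X n) < e)
          \<longrightarrow> (\<exists>l\<in>V. (\<lambda>n. ip_norm ip (X n - l)) \<longlonglongrightarrow> 0)"
    using h[unfolded own_hilbert_def, THEN conjunct2, THEN conjunct2, THEN conjunct2, THEN conjunct2, THEN conjunct2] .
  show ?thesis using c a by blast
qed

lemma norm_ip: "norm x = ip_norm cinner x"
  unfolding ip_norm_def by (rule norm_cinner)

context sesq begin
lemma parallelogram: "x\<in>V \<Longrightarrow> y\<in>V \<Longrightarrow> (nm (x+y))\<^sup>2 + (nm (x-y))\<^sup>2 = 2*(nm x)\<^sup>2 + 2*(nm y)\<^sup>2"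
proof -
  assume x: "x \<in> V" and y: "y \<in> V"
  have e1: "ip (x + y) (x + y) = ip x x + ip x y + ip y x + ip y y"
    using x y by (simp add: add_l add_r Vadd)
  have e2: "ip (x - y) (x - y) = ip x x - ip x y - ip y x + ip y y"
    using x y by (simp add: diff_l diff_r Vdiff)
  have "(nm (x+y))\<^sup>2 + (nm (x-y))\<^sup>2 = Re (ip (x + y) (x + y)) + Re (ip (x - y) (x - y))"
    using nm_sq Vadd Vdiff x y by simp
  also have "\<dots> = 2 * Re (ip x x) + 2 * Re (ip y y)" unfolding e1 e2 by simp
  also have "\<dots> = 2*(nm x)\<^sup>2 + 2*(nm y)\<^sup>2" using nm_sq x y by simp
  finally show ?thesis .
qed
end

lemma norm_sq_cinner: "(norm (x::'a::complex_inner))\<^sup>2 = Re (cinner x x)"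
  using sesq.nm_sq[OF sesq_UNIV, of x] norm_ip[of x] by simp

lemma parallelogram_norm: "(norm ((x::'a::complex_inner)+y))\<^sup>2 + (norm (x-y))\<^sup>2 = 2*(norm x)\<^sup>2 + 2*(norm y)\<^sup>2"
  using sesq.parallelogram[OF sesq_UNIV, of x y] by (simp add: norm_ip)

lemma cinner_zero_left[simp]: "cinner 0 (y::'a::complex_inner) = 0"
  using sesq.zero_l[OF sesq_UNIV] by simp
lemma cinner_zero_right[simp]: "cinner (y::'a::complex_inner) 0 = 0"
  using sesq.zero_r[OF sesq_UNIV] by simp
lemma cinner_add_right: "cinner (x::'a::complex_inner) (y + z) = cinner x y + cinner x z"
  using sesq.add_r[OF sesq_UNIV] by simp
lemma cinner_diff_left: "cinner ((x::'a::complex_inner) - y) z = cinner x z - cinner y z"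
  using sesq.diff_l[OF sesq_UNIV] by simp
lemma cinner_diff_right: "cinner (x::'a::complex_inner) (y - z) = cinner x y - cinner x z"
  using sesq.diff_r[OF sesq_UNIV] by simp
lemma cinner_scaleC_right: "cinner (x::'a::complex_inner) (c *\<^sub>C y) = cnj c * cinner x y"
  using sesq.scl_r[OF sesq_UNIV] by simp
lemma cinner_self: "cinner (x::'a::complex_inner) x = complex_of_real ((norm x)\<^sup>2)"
  using sesq.self_eq[OF sesq_UNIV] by (simp add: norm_ip)
lemma cinner_cs: "cmod (cinner (x::'a::complex_inner) y) \<le> norm x * norm y"
  using sesq.cauchy_schwarz[OF sesq_UNIV] by (simp add: norm_ip)
lemma norm_scaleC: "norm (c *\<^sub>C (x::'a::complex_inner)) = cmod c * norm x"
  using sesq.nm_scale[OF sesq_UNIV] by (simp add: norm_ip)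
lemma scaleC_neg: "(- c) *\<^sub>C (x::'a::complex_inner) = - (c *\<^sub>C x)"
proof -
  have "(- c) *\<^sub>C x = ((-1) * c) *\<^sub>C x" by simp
  also have "\<dots> = (-1) *\<^sub>C (c *\<^sub>C x)" by (simp only: scaleC_scaleC)
  also have "\<dots> = - (c *\<^sub>C x)" by (simp only: scaleC_minus1)
  finally show ?thesis .
qed

lemma riesz:
  fixes l :: "'h::{complex_inner,complete_space} \<Rightarrow> complex"
  assumes ladd: "\<And>x y. l (x + y) = l x + l y"
    and lscl: "\<And>c x. l (c *\<^sub>C x) = cnj c * l x"
    and lbd: "\<And>x. cmod (l x) \<le> C * norm x"
  shows "\<exists>v. \<forall>w. cinner v w = l w"
proof (cases "\<forall>w. l w = 0")
  case True
  then show ?thesis by (intro exI[of _ 0]) simp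
next
  case False
  then obtain w0 where w0: "l w0 \<noteq> 0" by blast
  have l0: "l 0 = 0" using ladd[of 0 0] by simp
  have lminus: "l (- x) = - l x" for x using lscl[of "-1" x] by (simp add: scaleC_minus1)
  have ldiff: "l (x - y) = l x - l y" for x y
  proof -
    have "l (x - y) = l (x + - y)" by (simp only: diff_conv_add_uminus)
    also have "\<dots> = l x - l y" using ladd[of x "-y"] lminus[of y] by simp
    finally show ?thesis .
  qed
  have lscR: "l (scaleR r x) = complex_of_real r * l x" for r x
    using lscl[of "complex_of_real r" x] by (simp add: scaleC_of_real)
  define C' where "C' = max C 1"
  have C'pos: "C' > 0" unfolding C'_def by simp
  have lbd': "cmod (l x) \<le> C' * norm x" for x
    using lbd[of x] unfolding C'_def by (meson max.cobounded1 mult_right_mono norm_ge_zero order.trans)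
  have cont: "continuous_on UNIV l"
    unfolding continuous_on_iff
  proof (intro ballI allI impI)
    fix x :: 'h and e :: real assume e: "e > 0"
    show "\<exists>d>0. \<forall>x'\<in>UNIV. dist x' x < d \<longrightarrow> dist (l x') (l x) < e"
    proof (intro exI[of _ "e / C'"] conjI ballI impI)
      show "e / C' > 0" using e C'pos by simp
      fix x' assume "dist x' x < e / C'"
      then have "C' * norm (x' - x) < e" using C'pos by (simp add: dist_norm field_simps)
      moreover have "dist (l x') (l x) \<le> C' * norm (x' - x)"
        using lbd'[of "x' - x"] ldiff[of x' x] by (simp add: dist_norm)
      ultimately show "dist (l x') (l x) < e" by simp
    qed
  qed
  define N where "N = {x. l x = 0}"
  have Nclosed: "closed N" unfolding N_def
    using closed_Collect_eq[OF cont continuous_on_const] by simp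
  have N0: "0 \<in> N" using l0 N_def by simp
  have Nadd: "x \<in> N \<Longrightarrow> y \<in> N \<Longrightarrow> x + y \<in> N" for x y using ladd N_def by simp
  have NscR: "x \<in> N \<Longrightarrow> scaleR r x \<in> N" for x r using lscR N_def by simp
  have NscC: "x \<in> N \<Longrightarrow> c *\<^sub>C x \<in> N" for x c using lscl N_def by simp
  define D where "D = Inf ((\<lambda>n. (norm (w0 - n))\<^sup>2) ` N)"
  have bdd: "bdd_below ((\<lambda>n. (norm (w0 - n))\<^sup>2) ` N)"
    by (rule bdd_belowI[of _ 0]) auto
  have Dle: "D \<le> (norm (w0 - m))\<^sup>2" if "m \<in> N" for m
    unfolding D_def using bdd that by (simp add: cInf_lower)
  have Dapprox: "\<exists>n\<in>N. (norm (w0 - n))\<^sup>2 < D + e" if "e > 0" for e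
  proof -
    have "Inf ((\<lambda>n. (norm (w0 - n))\<^sup>2) ` N) < D + e" using that D_def by simp
    then show ?thesis using N0 by (subst (asm) cInf_less_iff) (auto simp: bdd)
  qed
  have "\<forall>k. \<exists>n. n \<in> N \<and> (norm (w0 - n))\<^sup>2 < D + inverse (real (Suc k))"
  proof
    fix k
    have "inverse (real (Suc k)) > 0" by simp
    from Dapprox[OF this] show "\<exists>n. n \<in> N \<and> (norm (w0 - n))\<^sup>2 < D + inverse (real (Suc k))" by blast
  qed
  then obtain ns where ns: "\<And>k. ns k \<in> N" "\<And>k. (norm (w0 - ns k))\<^sup>2 < D + inverse (real (Suc k))"
    by metis
  have nsdist: "(norm (ns j - ns k))\<^sup>2 \<le> 2 * inverse (real (Suc j)) + 2 * inverse (real (Suc k))" for j k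
  proof -
    define a where "a = w0 - ns j"
    define b where "b = w0 - ns k"
    define m where "m = scaleR (1/2) (ns j + ns k)"
    have mN: "m \<in> N" unfolding m_def using ns Nadd NscR by blast
    have "a + b = scaleR 2 (w0 - m)" unfolding a_def b_def m_def by (simp add: algebra_simps scaleR_2)
    then have "(norm (a + b))\<^sup>2 = 4 * (norm (w0 - m))\<^sup>2" by (simp add: power2_eq_square)
    then have ab: "(norm (a + b))\<^sup>2 \<ge> 4 * D" using Dle[OF mN] by simp
    have "a - b = ns k - ns j" unfolding a_def b_def by simp
    then have "(norm (ns j - ns k))\<^sup>2 = (norm (a - b))\<^sup>2" by (simp add: norm_minus_commute)
    also have "\<dots> = 2*(norm a)\<^sup>2 + 2*(norm b)\<^sup>2 - (norm (a + b))\<^sup>2"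
      using parallelogram_norm[of a b] by simp
    also have "\<dots> \<le> 2 * inverse (real (Suc j)) + 2 * inverse (real (Suc k))"
      using ns(2)[of j] ns(2)[of k] ab unfolding a_def b_def by simp
    finally show ?thesis .
  qed
  have "Cauchy ns"
  proof (rule metric_CauchyI)
    fix e :: real assume e: "e > 0"
    obtain M where M: "inverse (real (Suc M)) < e\<^sup>2 / 4"
      using reals_Archimedean[of "e\<^sup>2/4"] e by auto
    show "\<exists>M. \<forall>m\<ge>M. \<forall>n\<ge>M. dist (ns m) (ns n) < e"
    proof (intro exI[of _ M] allI impI)
      fix m n assume mn: "m \<ge> M" "n \<ge> M"
      have im: "inverse (real (Suc m)) \<le> inverse (real (Suc M))" using mn by (simp add: field_simps)
      have inn: "inverse (real (Suc n)) \<le> inverse (real (Suc M))" using mn by (simp add: field_simps)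
      have "(norm (ns m - ns n))\<^sup>2 < e\<^sup>2" using nsdist[of m n] im inn M by linarith
      then have "norm (ns m - ns n) < e" using e by (simp add: power_less_imp_less_base)
      then show "dist (ns m) (ns n) < e" by (simp add: dist_norm)
    qed
  qed
  then obtain nstar where lim: "ns \<longlonglongrightarrow> nstar" using Cauchy_convergent_iff convergent_def by blast
  have nstarN: "nstar \<in> N" using Nclosed ns(1) lim closed_sequentially by blast
  have "(\<lambda>k. (norm (w0 - ns k))\<^sup>2) \<longlonglongrightarrow> (norm (w0 - nstar))\<^sup>2"
    by (intro tendsto_intros lim)
  moreover have "(\<lambda>k. D + inverse (real (Suc k))) \<longlonglongrightarrow> D + 0"
    by (intro tendsto_intros LIMSEQ_inverse_real_of_nat)
  ultimately have zmin0: "(norm (w0 - nstar))\<^sup>2 \<le> D"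
    using ns(2) by (intro LIMSEQ_le[of _ _ "\<lambda>k. D + inverse (real (Suc k))"]) (auto intro: less_imp_le)
  define z where "z = w0 - nstar"
  have zmin: "(norm z)\<^sup>2 \<le> (norm (z - m))\<^sup>2" if "m \<in> N" for m
  proof -
    have "nstar + m \<in> N" using nstarN that Nadd by blast
    then have h1: "D \<le> (norm (w0 - (nstar + m)))\<^sup>2" by (rule Dle)
    have eq: "w0 - (nstar + m) = z - m" unfolding z_def by (simp add: algebra_simps)
    have h2: "D \<le> (norm (z - m))\<^sup>2" using h1 by (simp only: eq)
    show ?thesis using h2 zmin0[folded z_def] by linarith
  qed
  have orth: "cinner z x = 0" if xN: "x \<in> N" for x
  proof -
    define a where "a = cinner z x"
    define s where "s = 1 / ((norm x)\<^sup>2 + 1)"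
    have xx: "0 < (norm x)\<^sup>2 + 1" by (simp add: add_nonneg_pos)
    have s: "s > 0" unfolding s_def using xx by simp
    have sx: "s * (norm x)\<^sup>2 \<le> 1" unfolding s_def using xx by (simp add: field_simps)
    define c where "c = complex_of_real s * a"
    have e: "cinner (z + (- c) *\<^sub>C x) (z + (- c) *\<^sub>C x)
       = cinner z z + cnj (- c) * a + (- c) * cnj a + (- c) * cnj (- c) * cinner x x"
      using sesq.expand[OF sesq_UNIV, of z x "- c"] a_def by simp
    have aa: "a * cnj a = complex_of_real ((cmod a)\<^sup>2)" by (rule complex_norm_square[symmetric])
    have t1: "cnj (- c) * a = - complex_of_real (s * (cmod a)\<^sup>2)"
      unfolding c_def using aa by (simp add: algebra_simps)
    have t2: "(- c) * cnj a = - complex_of_real (s * (cmod a)\<^sup>2)"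
      unfolding c_def using aa by (simp add: algebra_simps)
    have t3: "(- c) * cnj (- c) * cinner x x = complex_of_real (s\<^sup>2 * (cmod a)\<^sup>2 * (norm x)\<^sup>2)"
      unfolding c_def cinner_self using aa by (simp add: algebra_simps power2_eq_square)
    have zc: "z + (- c) *\<^sub>C x = z - c *\<^sub>C x" by (simp add: scaleC_neg)
    have "(norm z)\<^sup>2 \<le> (norm (z - c *\<^sub>C x))\<^sup>2" using zmin NscC xN by blast
    also have "\<dots> = Re (cinner (z + (- c) *\<^sub>C x) (z + (- c) *\<^sub>C x))"
      unfolding zc norm_sq_cinner ..
    also have "\<dots> = (norm z)\<^sup>2 - 2 * (s * (cmod a)\<^sup>2) + s\<^sup>2 * (cmod a)\<^sup>2 * (norm x)\<^sup>2"
      unfolding e t1 t2 t3 by (simp add: norm_sq_cinner)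
    finally have "2 * (s * (cmod a)\<^sup>2) \<le> s * (s * (norm x)\<^sup>2) * (cmod a)\<^sup>2"
      by (simp add: power2_eq_square algebra_simps)
    also have "\<dots> \<le> s * 1 * (cmod a)\<^sup>2"
      using sx s by (intro mult_right_mono mult_left_mono) auto
    finally have "s * (cmod a)\<^sup>2 \<le> 0" by simp
    then have "(cmod a)\<^sup>2 \<le> 0" using s by (simp add: mult_le_0_iff)
    then show ?thesis unfolding a_def by simp
  qed
  have lz: "l z = l w0" unfolding z_def using ldiff nstarN N_def by simp
  then have z0: "z \<noteq> 0" using w0 l0 by auto
  define v where "v = (l z / complex_of_real ((norm z)\<^sup>2)) *\<^sub>C z"
  have nz: "complex_of_real ((norm z)\<^sup>2) \<noteq> 0" using z0 by simp
  show ?thesis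
  proof (intro exI[of _ v] allI)
    fix w
    define c where "c = cnj (l w / l z)"
    have "l (w - c *\<^sub>C z) = 0" unfolding c_def using ldiff lscl lz w0 by simp
    then have "cinner z (w - c *\<^sub>C z) = 0" using orth N_def by simp
    then have "cinner z w = cnj c * cinner z z" by (simp add: cinner_diff_right cinner_scaleC_right)
    then have "cinner z w = (l w / l z) * complex_of_real ((norm z)\<^sup>2)"
      unfolding c_def cinner_self by simp
    then show "cinner v w = l w" unfolding v_def cinner_scaleC_left
      using nz w0 lz by (simp add: field_simps)
  qed
qed

lemma open_map_bound:
  fixes B S :: "'h::{complex_inner,complete_space} \<Rightarrow> 'h" and H1 DA :: "'h set"
    and ip1 :: "'h \<Rightarrow> 'h \<Rightarrow> complex"
  assumes H1: "own_hilbert H1 ip1"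
    and DAsub: "DA \<subseteq> H1" and DAsubsp: "csubspace DA"
    and DAclosed: "\<And>X l. (\<forall>n. X n \<in> DA) \<Longrightarrow> l \<in> H1 \<Longrightarrow> (\<lambda>n. ip_norm ip1 (X n - l)) \<longlonglongrightarrow> 0 \<Longrightarrow> l \<in> DA"
    and Sadd: "\<And>x y. x\<in>H1 \<Longrightarrow> y\<in>H1 \<Longrightarrow> S (x + y) = S x + S y"
    and Sdiff: "\<And>x y. x\<in>H1 \<Longrightarrow> y\<in>H1 \<Longrightarrow> S (x - y) = S x - S y"
    and Sbd: "\<And>u. u\<in>H1 \<Longrightarrow> norm (S u) \<le> CS * ip_norm ip1 u"
    and Blin: "lin_on UNIV B"
    and BDA: "\<And>x. B x \<in> DA" and SB: "\<And>x. S (B x) = x"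
    and BS: "\<And>u. u \<in> DA \<Longrightarrow> B (S u) = u"
  shows "\<exists>C. \<forall>x. ip_norm ip1 (B x) \<le> C * norm x"
proof -
  interpret H: sesq H1 ip1 using own_hilbert_sesq[OF H1] .
  have BH: "B x \<in> H1" for x using BDA DAsub by blast
  have Badd: "B (x + y) = B x + B y" for x y using Blin unfolding lin_on_def by blast
  have Bscl: "B (c *\<^sub>C x) = c *\<^sub>C B x" for c x using Blin unfolding lin_on_def by blast
  have B0: "B 0 = 0" using Bscl[of 0 0] by (simp add: scaleC_zero_left)
  have Bminus: "B (- x) = - B x" for x using Bscl[of "-1" x] by (simp add: scaleC_minus1)
  have Bdiff: "B (x - y) = B x - B y" for x y
  proof -
    have "B (x - y) = B (x + - y)" by (simp only: diff_conv_add_uminus)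
    also have "\<dots> = B x + B (- y)" by (rule Badd)
    also have "\<dots> = B x + - B y" by (simp only: Bminus)
    finally show ?thesis by simp
  qed
  have BscR: "B (scaleR r x) = scaleR r (B x)" for r x
    using Bscl[of "complex_of_real r" x] by (simp add: scaleC_of_real)
  have nmR: "H.nm (scaleR r u) = \<bar>r\<bar> * H.nm u" if "u \<in> H1" for r u
    using H.nm_scale[OF that, of "complex_of_real r"] by (simp add: scaleC_of_real)
  define U where "U n = {x. H.nm (B x) \<le> real n}" for n :: nat
  have cover: "\<Union> (range (\<lambda>n. closure (U n))) = UNIV"
  proof (rule set_eqI, rule iffI)
    fix x :: 'h
    have "x \<in> U (nat \<lceil>H.nm (B x)\<rceil>)" unfolding U_def by simp linarith
    then show "x \<in> \<Union> (range (\<lambda>n. closure (U n)))" using closure_subset by blast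
  qed simp
  have "\<exists>n. interior (closure (U n)) \<noteq> {}"
  proof (rule ccontr)
    assume "\<not> (\<exists>n. interior (closure (U n)) \<noteq> {})"
    then have e: "\<And>n. interior (closure (U n)) = {}" by blast
    have "euclidean interior_of \<Union> (range (\<lambda>n. closure (U n))) = {}"
    proof (rule Baire_category_alt)
      show "completely_metrizable_space (euclidean :: 'h topology) \<or>
            locally_compact_space (euclidean :: 'h topology) \<and> regular_space euclidean"
        using completely_metrizable_space_euclidean by blast
      show "countable (range (\<lambda>n. closure (U n)))" by simp
      show "closedin euclidean T \<and> euclidean interior_of T = {}" if "T \<in> range (\<lambda>n. closure (U n))" for T
        using that e by (auto simp: closed_closedin[symmetric])
    qed
    then show False unfolding cover by simp
  qed
  then obtain n x0 where "x0 \<in> interior (closure (U n))" by blast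
  then obtain r where r: "r > 0" "ball x0 r \<subseteq> closure (U n)" by (auto simp: mem_interior)
  define c where "c = 4 * real n / r"
  have c0: "c \<ge> 0" unfolding c_def using r by simp
  have approx: "\<exists>w. H.nm (B w) \<le> c * norm y \<and> norm (y - w) < e" if e: "e > 0" and y0: "y \<noteq> 0" for y e
  proof -
    define t where "t = r / (2 * norm y)"
    have t: "t > 0" unfolding t_def using r y0 by simp
    define y' where "y' = scaleR t y"
    have ny': "norm y' = r / 2" unfolding y'_def t_def using y0 r by simp
    have x0in: "x0 \<in> closure (U n)" using r by (simp add: subset_iff)
    have x0y: "x0 + y' \<in> closure (U n)" using r ny' by (auto simp: subset_iff dist_norm)
    have et: "e * t / 2 > 0" using e t by simp
    obtain a where a: "a \<in> U n" "dist a (x0 + y') < e * t / 2"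
      using x0y et unfolding closure_approachable by blast
    obtain b where b: "b \<in> U n" "dist b x0 < e * t / 2"
      using x0in et unfolding closure_approachable by blast
    define w' where "w' = a - b"
    have "H.nm (B w') \<le> H.nm (B a) + H.nm (B b)"
      unfolding w'_def Bdiff using H.triangle[of "B a" "- B b"] H.nm_minus[of "B b"] BH H.Vminus
      by (simp add: diff_conv_add_uminus del: add_uminus_conv_diff)
    also have "\<dots> \<le> 2 * real n" using a(1) b(1) unfolding U_def by simp
    finally have w'1: "H.nm (B w') \<le> 2 * real n" .
    have "w' - y' = (a - (x0 + y')) - (b - x0)" unfolding w'_def by (simp add: algebra_simps)
    then have "norm (w' - y') \<le> norm (a - (x0 + y')) + norm (b - x0)"
      by (metis norm_triangle_ineq4)
    also have "\<dots> < e * t" using a(2) b(2) by (simp add: dist_norm)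
    finally have w'2: "norm (w' - y') < e * t" .
    define w where "w = scaleR (1/t) w'"
    show ?thesis
    proof (intro exI[of _ w] conjI)
      have "H.nm (B w) = (1/t) * H.nm (B w')" unfolding w_def BscR using nmR BH t by simp
      also have "\<dots> \<le> (1/t) * (2 * real n)" using w'1 t by (simp add: divide_right_mono)
      also have "\<dots> = c * norm y" unfolding c_def t_def using y0 r by (simp add: field_simps)
      finally show "H.nm (B w) \<le> c * norm y" .
      have "y - w = scaleR (1/t) (y' - w')" unfolding w_def y'_def using t by (simp add: algebra_simps)
      then have "norm (y - w) = (1/t) * norm (w' - y')" using t by (simp add: norm_minus_commute)
      also have "\<dots> < (1/t) * (e * t)" using w'2 t by (intro mult_strict_left_mono) auto
      also have "\<dots> = e" using t by simp
      finally show "norm (y - w) < e" .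
    qed
  qed
  have step: "\<exists>u. u \<in> DA \<and> H.nm u \<le> c * norm y \<and> norm (y - S u) \<le> norm y / 2" for y
  proof (cases "y = 0")
    case True
    then show ?thesis using BDA[of 0] B0 SB[of 0] H.nm_zero by (intro exI[of _ 0]) auto
  next
    case False
    then obtain w where w: "H.nm (B w) \<le> c * norm y" "norm (y - w) < norm y / 2"
      using approx[of "norm y / 2" y] by auto
    show ?thesis using w BDA[of w] SB[of w] by (intro exI[of _ "B w"]) auto
  qed
  then obtain f where f: "\<And>y. f y \<in> DA" "\<And>y. H.nm (f y) \<le> c * norm y"
      "\<And>y. norm (y - S (f y)) \<le> norm y / 2"
    by metis
  have fH: "f y \<in> H1" for y using f(1) DAsub by blast
  show ?thesis
  proof (intro exI[of _ "2 * c"] allI)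
    fix x
    define xs where "xs = rec_nat x (\<lambda>k y. y - S (f y))"
    have xs0: "xs 0 = x" and xsS: "xs (Suc k) = xs k - S (f (xs k))" for k
      unfolding xs_def by simp_all
    define P where "P k = (\<Sum>i<k. f (xs i))" for k
    have P0: "P 0 = 0" and PS: "P (Suc k) = P k + f (xs k)" for k unfolding P_def by simp_all
    have PDA: "P k \<in> DA" for k
      by (induction k) (simp_all add: P0 PS csubspace_zero[OF DAsubsp] csubspace_add[OF DAsubsp] f(1))
    have PH: "P k \<in> H1" for k using PDA DAsub by blast
    have S0: "S 0 = 0" using Sdiff[of 0 0] H.V0 by simp
    have SP: "S (P k) = x - xs k" for k
    proof (induction k)
      case 0 then show ?case using P0 S0 xs0 by simp
    next
      case (Suc k)
      then show ?case using PS Sadd[OF PH fH] xsS by simp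
    qed
    have xsb: "norm (xs k) \<le> (1/2)^k * norm x" for k
    proof (induction k)
      case 0 then show ?case using xs0 by simp
    next
      case (Suc k)
      have "norm (xs (Suc k)) \<le> norm (xs k) / 2" using xsS f(3) by simp
      also have "\<dots> \<le> (1/2)^k * norm x / 2" using Suc by simp
      finally show ?case by simp
    qed
    have fb: "H.nm (f (xs k)) \<le> c * norm x * (1/2)^k" for k
    proof -
      have "H.nm (f (xs k)) \<le> c * norm (xs k)" by (rule f(2))
      also have "\<dots> \<le> c * ((1/2)^k * norm x)" using xsb c0 by (simp add: mult_left_mono)
      finally show ?thesis by (simp add: algebra_simps)
    qed
    have Pd: "H.nm (P (l + d) - P l) \<le> c * norm x * (2 * (1/2)^l - 2 * (1/2)^(l + d))" for l d
    proof (induction d)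
      case 0 then show ?case using H.nm_zero by simp
    next
      case (Suc d)
      have eq: "P (l + Suc d) - P l = (P (l + d) - P l) + f (xs (l + d))" using PS by simp
      have "H.nm (P (l + Suc d) - P l) \<le> H.nm (P (l + d) - P l) + H.nm (f (xs (l + d)))"
        unfolding eq using H.triangle[of "P (l + d) - P l" "f (xs (l + d))"] H.Vdiff PH fH by blast
      also have "\<dots> \<le> c * norm x * (2 * (1/2)^l - 2 * (1/2)^(l + d)) + c * norm x * (1/2)^(l+d)"
        using Suc fb by (intro add_mono) auto
      also have "\<dots> = c * norm x * (2 * (1/2)^l - 2 * (1/2)^(l + Suc d))"
        by (simp add: algebra_simps)
      finally show ?case .
    qed
    have cx0: "c * norm x \<ge> 0" using c0 by simp
    have Pd': "H.nm (P m - P l) \<le> c * norm x * (2 * (1/2)^l)" if "l \<le> m" for l m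
    proof -
      define d where "d = m - l"
      have m: "m = l + d" unfolding d_def using that by simp
      have "H.nm (P m - P l) \<le> c * norm x * (2 * (1/2)^l - 2 * (1/2)^(l + d))" unfolding m by (rule Pd)
      also have "\<dots> \<le> c * norm x * (2 * (1/2)^l)" using cx0 by (intro mult_left_mono) auto
      finally show ?thesis .
    qed
    have PnmB: "H.nm (P m) \<le> 2 * c * norm x" for m
      using Pd'[of 0 m] P0 by simp
    have "\<exists>u\<in>H1. (\<lambda>m. H.nm (P m - u)) \<longlonglongrightarrow> 0"
    proof (rule own_hilbert_complete[OF H1])
      show "\<forall>n. P n \<in> H1" using PH by blast
      show "\<forall>e>0. \<exists>N. \<forall>m\<ge>N. \<forall>n\<ge>N. H.nm (P m - P n) < e"
      proof (intro allI impI)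
        fix e :: real assume e: "e > 0"
        have e': "e / (2 * c * norm x + 1) > 0" using e cx0 by simp
        obtain N where N: "(1/2)^N < e / (2 * c * norm x + 1)"
          using real_arch_pow_inv[OF e', of "1/2"] by auto
        show "\<exists>N. \<forall>m\<ge>N. \<forall>n\<ge>N. H.nm (P m - P n) < e"
        proof (intro exI[of _ N] allI impI)
          fix m n assume mn: "m \<ge> N" "n \<ge> N"
          have hb: "H.nm (P a - P b) \<le> c * norm x * (2 * (1/2)^N)" if "b \<le> a" "b \<ge> N" for a b
          proof -
            have "H.nm (P a - P b) \<le> c * norm x * (2 * (1/2)^b)" using Pd' that by blast
            also have "\<dots> \<le> c * norm x * (2 * (1/2)^N)"
              using cx0 that by (intro mult_left_mono) (auto intro: power_decreasing)
            finally show ?thesis .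
          qed
          have "H.nm (P m - P n) \<le> c * norm x * (2 * (1/2)^N)"
          proof (cases "n \<le> m")
            case True then show ?thesis using hb mn by blast
          next
            case False
            then have "H.nm (P n - P m) \<le> c * norm x * (2 * (1/2)^N)"
              by (intro hb) (use mn in auto)
            then show ?thesis using H.nm_commute[of "P n" "P m"] PH by simp
          qed
          also have "\<dots> = (2 * c * norm x) * (1/2)^N" by simp
          also have "\<dots> \<le> (2 * c * norm x + 1) * (1/2)^N" by (intro mult_right_mono) auto
          also have "\<dots> < e" using N cx0 by (simp add: field_simps)
          finally show "H.nm (P m - P n) < e" .
        qed
      qed
    qed
    then obtain u where u: "u \<in> H1" "(\<lambda>m. H.nm (P m - u)) \<longlonglongrightarrow> 0" by blast
    have uDA: "u \<in> DA" using DAclosed[of P u] PDA u by blast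
    have ev: "\<exists>M. \<forall>m\<ge>M. H.nm (P m - u) < e" if "e > 0" for e
    proof -
      have nn: "H.nm (P m - u) \<ge> 0" for m using H.nm_nonneg H.Vdiff PH u(1) by blast
      have "\<exists>M. \<forall>m\<ge>M. norm (H.nm (P m - u) - 0) < e" using u(2) that unfolding LIMSEQ_iff by blast
      then obtain M where M: "\<forall>m\<ge>M. norm (H.nm (P m - u) - 0) < e" by blast
      show ?thesis
      proof (intro exI[of _ M] allI impI)
        fix m assume "m \<ge> M"
        then have "\<bar>H.nm (P m - u)\<bar> < e" using M by simp
        then show "H.nm (P m - u) < e" by (simp add: abs_less_iff)
      qed
    qed
    have Sux: "S u = x"
    proof (rule ccontr)
      assume ne: "S u \<noteq> x"
      define e where "e = norm (S u - x)"
      have e: "e > 0" using ne unfolding e_def by simp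
      define CS' where "CS' = max CS 1"
      have CS'p: "CS' > 0" unfolding CS'_def by simp
      obtain M where M: "\<forall>m\<ge>M. H.nm (P m - u) < e / (2 * CS')" using ev[of "e / (2 * CS')"] e CS'p by auto
      obtain M2 where M2: "(1/2)^M2 < e / (2 * (norm x + 1))"
      proof -
        have "e / (2 * (norm x + 1)) > 0" using e by (simp add: add_nonneg_pos)
        then show ?thesis using that real_arch_pow_inv[of "e / (2 * (norm x + 1))" "1/2"] by auto
      qed
      define m where "m = max M M2"
      have "S u - x = S (u - P m) - xs m" using Sdiff[OF u(1) PH] SP by simp
      then have "e \<le> norm (S (u - P m)) + norm (xs m)" unfolding e_def by (metis norm_triangle_ineq4)
      also have "norm (S (u - P m)) \<le> CS * H.nm (u - P m)" using Sbd H.Vdiff u(1) PH by blast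
      also have "\<dots> \<le> CS' * H.nm (u - P m)" unfolding CS'_def
        using H.nm_nonneg[of "u - P m"] H.Vdiff u(1) PH by (intro mult_right_mono) auto
      also have "H.nm (u - P m) = H.nm (P m - u)" using H.nm_commute u(1) PH by blast
      also have "CS' * H.nm (P m - u) < CS' * (e / (2 * CS'))"
        using M m_def CS'p by (intro mult_strict_left_mono) auto
      also have "\<dots> = e / 2" using CS'p by simp
      also have "norm (xs m) \<le> (1/2)^m * norm x" by (rule xsb)
      also have "\<dots> \<le> (1/2)^M2 * norm x" unfolding m_def by (intro mult_right_mono power_decreasing) auto
      also have "\<dots> \<le> (1/2)^M2 * (norm x + 1)" by (intro mult_left_mono) auto
      also have "\<dots> < e / (2 * (norm x + 1)) * (norm x + 1)"
        by (intro mult_strict_right_mono) (use M2 in \<open>auto simp: add_nonneg_pos\<close>)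
      also have "\<dots> = e / 2"
      proof -
        have "norm x + 1 \<noteq> 0" by (metis add_nonneg_pos norm_ge_zero zero_less_one less_irrefl)
        have g: "\<And>a::real. a \<noteq> 0 \<Longrightarrow> e / (2 * a) * a = e / 2" by (simp add: field_simps)
        show ?thesis by (rule g) fact
      qed
      finally show False by simp
    qed
    have Bxu: "B x = u" using BS[OF uDA] Sux by simp
    have "H.nm u \<le> 2 * c * norm x + e" if e: "e > 0" for e
    proof -
      obtain M where M: "\<forall>m\<ge>M. H.nm (P m - u) < e" using ev e by blast
      have "u = P M - (P M - u)" by simp
      then have "H.nm u \<le> H.nm (P M) + H.nm (P M - u)"
        using H.triangle_diff[of "P M" 0 u] H.nm_minus H.V0 PH u(1) H.Vdiff
        by (metis H.nm_commute diff_zero H.triangle_diff)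
      also have "\<dots> \<le> 2 * c * norm x + e" using PnmB[of M] M by (intro add_mono) auto
      finally show ?thesis .
    qed
    then have "H.nm u \<le> 2 * c * norm x" by (rule field_le_epsilon)
    then show "H.nm (B x) \<le> 2 * c * norm x" using Bxu by simp
  qed
qed

lemma dense_unique:
  fixes D :: "'h::complex_inner set"
  assumes dense: "closure D = UNIV" and h: "\<forall>u\<in>D. cinner u w = cinner u w'"
  shows "w = w'"
proof (rule ccontr)
  assume "w \<noteq> w'"
  define d where "d = w - w'"
  have d0: "d \<noteq> 0" using \<open>w \<noteq> w'\<close> unfolding d_def by simp
  have hd: "cinner u d = 0" if "u \<in> D" for u using h that unfolding d_def by (simp add: cinner_diff_right)
  define e where "e = norm d / 2"
  have e: "e > 0" using d0 unfolding e_def by simp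
  have "d \<in> closure D" using dense by simp
  then obtain u where u: "u \<in> D" "dist u d < e" using e unfolding closure_approachable by blast
  have "cinner d d = cinner (d - u) d + cinner u d" by (simp add: cinner_diff_left)
  then have cdd: "cinner d d = cinner (d - u) d" using hd[OF u(1)] by simp
  have "(norm d)\<^sup>2 = cmod (cinner d d)" unfolding cinner_self norm_of_real by simp
  also have "\<dots> \<le> norm (d - u) * norm d" unfolding cdd by (rule cinner_cs)
  also have "\<dots> \<le> e * norm d" using u(2) by (intro mult_right_mono) (auto simp: dist_norm norm_minus_commute)
  also have "\<dots> = (norm d)\<^sup>2 / 2" unfolding e_def by (simp add: power2_eq_square)
  finally show False using d0 by simp
qed

lemma adj_char:
  assumes "v \<in> adj_dom D T" "u \<in> D"
  shows "cinner (T u) v = cinner u (adj D T v)"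
proof -
  have "\<exists>w. \<forall>u\<in>D. cinner (T u) v = cinner u w" using assms(1) unfolding adj_dom_def by blast
  then have "\<forall>u\<in>D. cinner (T u) v = cinner u (adj D T v)" unfolding adj_def by (rule someI_ex)
  then show ?thesis using assms(2) by blast
qed

lemma adj_eqI:
  fixes D :: "'h::complex_inner set"
  assumes dense: "closure D = UNIV" and h: "\<forall>u\<in>D. cinner (T u) v = cinner u w"
  shows "v \<in> adj_dom D T \<and> adj D T v = w"
proof
  show vin: "v \<in> adj_dom D T" unfolding adj_dom_def using h by blast
  have "\<forall>u\<in>D. cinner u (adj D T v) = cinner u w" using adj_char[OF vin] h by simp
  then show "adj D T v = w" by (rule dense_unique[OF dense])
qed

lemma adj_add:
  fixes D :: "'h::complex_inner set"
  assumes dense: "closure D = UNIV" and v: "v \<in> adj_dom D T" and v': "v' \<in> adj_dom D T"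
  shows "v + v' \<in> adj_dom D T \<and> adj D T (v + v') = adj D T v + adj D T v'"
  using adj_char[OF v] adj_char[OF v']
  by (intro adj_eqI[OF dense]) (simp add: cinner_add_right)

lemma adj_scale:
  fixes D :: "'h::complex_inner set"
  assumes dense: "closure D = UNIV" and v: "v \<in> adj_dom D T"
  shows "c *\<^sub>C v \<in> adj_dom D T \<and> adj D T (c *\<^sub>C v) = c *\<^sub>C adj D T v"
  using adj_char[OF v]
  by (intro adj_eqI[OF dense]) (simp add: cinner_scaleC_right)

lemma adj_diff:
  fixes D :: "'h::complex_inner set"
  assumes dense: "closure D = UNIV" and v: "v \<in> adj_dom D T" and v': "v' \<in> adj_dom D T"
  shows "v - v' \<in> adj_dom D T \<and> adj D T (v - v') = adj D T v - adj D T v'"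
  using adj_char[OF v] adj_char[OF v']
  by (intro adj_eqI[OF dense]) (simp add: cinner_diff_right)

lemma gn_ge1: "norm v \<le> graph_norm D T v"
  unfolding graph_norm_def by simp
lemma gn_ge2: "norm (adj D T v) \<le> graph_norm D T v"
  unfolding graph_norm_def by simp
lemma gn_le: "graph_norm D T v \<le> norm v + norm (adj D T v)"
  unfolding graph_norm_def by (rule sqrt_sum_squares_le_sum) auto
lemma gn_nonneg: "0 \<le> graph_norm D T v"
  unfolding graph_norm_def by simp
lemma gn_zero: "adj D T v = 0 \<Longrightarrow> graph_norm D T v = norm v"
  unfolding graph_norm_def by simp

lemma antidual_add: "f \<in> antidual K ipK \<Longrightarrow> x \<in> K \<Longrightarrow> y \<in> K \<Longrightarrow> f (x + y) = f x + f y"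
  unfolding antidual_def by blast
lemma antidual_scl: "f \<in> antidual K ipK \<Longrightarrow> x \<in> K \<Longrightarrow> f (c *\<^sub>C x) = cnj c * f x"
  unfolding antidual_def by blast
lemma antidual_bd: "f \<in> antidual K ipK \<Longrightarrow> \<exists>C. \<forall>x\<in>K. cmod (f x) \<le> C * ip_norm ipK x"
  unfolding antidual_def by blast
lemma antidual_out: "f \<in> antidual K ipK \<Longrightarrow> x \<notin> K \<Longrightarrow> f x = 0"
  unfolding antidual_def by blast

lemma dual_bdd:
  assumes K: "sesq K ipK" and f: "f \<in> antidual K ipK"
  shows "bdd_above ((\<lambda>x. cmod (f x)) ` {x\<in>K. ip_norm ipK x \<le> 1})"
proof -
  interpret K: sesq K ipK by fact
  obtain C where C: "\<forall>x\<in>K. cmod (f x) \<le> C * ip_norm ipK x" using antidual_bd[OF f] by blast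
  show ?thesis
  proof (rule bdd_aboveI[of _ "max C 0"])
    fix y assume "y \<in> (\<lambda>x. cmod (f x)) ` {x\<in>K. ip_norm ipK x \<le> 1}"
    then obtain x where x: "x \<in> K" "ip_norm ipK x \<le> 1" "y = cmod (f x)" by blast
    have "y \<le> C * ip_norm ipK x" using C x by simp
    also have "\<dots> \<le> max C 0 * ip_norm ipK x" using K.nm_nonneg[OF x(1)] by (intro mult_right_mono) auto
    also have "\<dots> \<le> max C 0 * 1" using x(2) by (intro mult_left_mono) auto
    finally show "y \<le> max C 0" by simp
  qed
qed

lemma dual_le:
  assumes K: "sesq K ipK" and f: "f \<in> antidual K ipK" and x: "x \<in> K"
  shows "cmod (f x) \<le> dual_norm K ipK f * ip_norm ipK x"
proof -
  interpret K: sesq K ipK by fact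
  have f0: "f 0 = 0" using antidual_add[OF f K.V0 K.V0] by simp
  show ?thesis
  proof (cases "ip_norm ipK x = 0")
    case True
    then have "x = 0" using K.nm_eq0 x by blast
    then show ?thesis using f0 K.nm_zero by simp
  next
    case False
    define n where "n = ip_norm ipK x"
    have n: "n > 0" using False K.nm_nonneg[OF x] unfolding n_def by simp
    define x' where "x' = complex_of_real (1 / n) *\<^sub>C x"
    have x'K: "x' \<in> K" unfolding x'_def using K.Vscale x by blast
    have "ip_norm ipK x' = cmod (complex_of_real (1/n)) * n" unfolding x'_def n_def by (rule K.nm_scale[OF x])
    then have nx': "ip_norm ipK x' = 1" using n by (simp only: norm_of_real) simp
    have fx': "f x' = complex_of_real (1 / n) * f x" unfolding x'_def using antidual_scl[OF f x] by simp
    have "cmod (f x') \<le> dual_norm K ipK f" unfolding dual_norm_def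
      using x'K nx' dual_bdd[OF K f] by (intro cSUP_upper) auto
    then have "cmod (f x) / n \<le> dual_norm K ipK f" using fx' n by (simp add: norm_divide)
    then show ?thesis using n unfolding n_def[symmetric] by (simp add: field_simps)
  qed
qed

lemma dual_nonneg:
  assumes K: "sesq K ipK" and f: "f \<in> antidual K ipK"
  shows "0 \<le> dual_norm K ipK f"
proof -
  interpret K: sesq K ipK by fact
  have "cmod (f 0) \<le> dual_norm K ipK f" unfolding dual_norm_def
    using K.V0 K.nm_zero dual_bdd[OF K f] by (intro cSUP_upper) auto
  then show ?thesis by (smt (verit) norm_ge_zero)
qed

lemma dual_least:
  assumes K: "sesq K ipK" and h: "\<And>x. x \<in> K \<Longrightarrow> ip_norm ipK x \<le> 1 \<Longrightarrow> cmod (f x) \<le> M"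
  shows "dual_norm K ipK f \<le> M"
proof -
  interpret K: sesq K ipK by fact
  have ne: "{x\<in>K. ip_norm ipK x \<le> 1} \<noteq> {}" using K.V0 K.nm_zero by auto
  show ?thesis unfolding dual_norm_def using ne h by (intro cSUP_least) auto
qed

theorem theorem4p5:
  fixes DT :: "'h::{complex_inner,complete_space} set" and T :: "'h \<Rightarrow> 'h"
    and H1 :: "'h set" and ip1 :: "'h \<Rightarrow> 'h \<Rightarrow> complex"
    and K :: "'k::{complex_inner,complete_space} set" and ipK :: "'k \<Rightarrow> 'k \<Rightarrow> complex"
    and \<gamma>0 \<gamma>1 :: "'h \<Rightarrow> 'k"
    and \<Gamma>0 :: "'h \<Rightarrow> ('k \<Rightarrow> complex)"
    and DA :: "'h set" and A :: "'h \<Rightarrow> 'h"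
  assumes sepH0: "\<exists>S. countable S \<and> closure S = (UNIV :: 'h set)"
    and sepK: "\<exists>S. countable S \<and> closure S = (UNIV :: 'k set)"
    (* T closed, densely defined, symmetric *)
    and T_lin: "lin_on DT T"
    and T_closed: "closed_op DT T"
    and T_dense: "closure DT = UNIV"
    and T_sym: "symmetric_op DT T"
    (* H1: dense subspace, Hilbert in its own right, bounded inclusion *)
    and H1_hilb: "own_hilbert H1 ip1"
    and H1_dense: "closure H1 = UNIV"
    and H1_incl: "\<exists>C. \<forall>u\<in>H1. norm u \<le> C * ip_norm ip1 u"
    (* K: dense subspace of K^\<partial>, Hilbert in its own right, bounded inclusion *)
    and K_hilb: "own_hilbert K ipK"
    and K_dense: "closure K = UNIV"
    and K_incl: "\<exists>C. \<forall>x\<in>K. norm x \<le> C * ip_norm ipK x"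
    (* H1 \<subseteq> dom(adjoint T) densely in the graph norm; adjoint of T on H1 bounded *)
    and H1_sub: "H1 \<subseteq> adj_dom DT T"
    and H1_graph_dense: "\<forall>v\<in>adj_dom DT T. \<forall>e>0. \<exists>u\<in>H1. graph_norm DT T (v - u) < e"
    and Tstar_bdd: "\<exists>C. \<forall>u\<in>H1. norm (adj DT T u) \<le> C * ip_norm ip1 u"
    (* trace maps *)
    and \<gamma>0_map: "\<gamma>0 ` H1 \<subseteq> K" and \<gamma>1_map: "\<gamma>1 ` H1 \<subseteq> K"
    and \<gamma>0_lin: "lin_on H1 \<gamma>0" and \<gamma>1_lin: "lin_on H1 \<gamma>1"
    and \<gamma>0_bdd: "\<exists>C. \<forall>u\<in>H1. ip_norm ipK (\<gamma>0 u) \<le> C * ip_norm ip1 u"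
    and \<gamma>1_bdd: "\<exists>C. \<forall>u\<in>H1. ip_norm ipK (\<gamma>1 u) \<le> C * ip_norm ip1 u"
    and \<gamma>_surj: "\<forall>a\<in>K. \<forall>b\<in>K. \<exists>u\<in>H1. \<gamma>0 u = a \<and> \<gamma>1 u = b"
    and ker_dense: "closure {u\<in>H1. \<gamma>0 u = 0 \<and> \<gamma>1 u = 0} = UNIV"
    and DT_ker: "DT = {u\<in>H1. \<gamma>0 u = 0 \<and> \<gamma>1 u = 0}"
    and lagrange: "\<forall>u\<in>H1. \<forall>v\<in>H1.
        cinner (adj DT T u) v - cinner u (adj DT T v)
          = cinner (\<gamma>1 u) (\<gamma>0 v) - cinner (\<gamma>0 u) (\<gamma>1 v)"
    (* Gamma0: the continuous extension of gamma0 to dom(adjoint T), into K dual *)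
    and \<Gamma>0_map: "\<forall>u\<in>adj_dom DT T. \<Gamma>0 u \<in> antidual K ipK"
    and \<Gamma>0_add: "\<forall>u\<in>adj_dom DT T. \<forall>v\<in>adj_dom DT T. \<forall>x. \<Gamma>0 (u + v) x = \<Gamma>0 u x + \<Gamma>0 v x"
    and \<Gamma>0_scale: "\<forall>c. \<forall>u\<in>adj_dom DT T. \<forall>x. \<Gamma>0 (c *\<^sub>C u) x = c * \<Gamma>0 u x"
    and \<Gamma>0_bdd: "\<exists>C. \<forall>u\<in>adj_dom DT T. dual_norm K ipK (\<Gamma>0 u) \<le> C * graph_norm DT T u"
    and \<Gamma>0_ext: "\<forall>u\<in>H1. \<Gamma>0 u = emb K (\<gamma>0 u)"
    (* the operator A *)
    and A_sa: "self_adjoint_op DA A"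
    and T_le_A: "op_le DT T DA A"
    and A_le_Tstar: "op_le DA A (adj_dom DT T) (adj DT T)"
    and DA_eq: "DA = {u\<in>H1. \<gamma>0 u = 0}"
    and A_inv: "\<exists>B. lin_on UNIV B \<and> (\<exists>C. \<forall>x. norm (B x) \<le> C * norm x)
                  \<and> (\<forall>x. B x \<in> DA \<and> A (B x) = x) \<and> (\<forall>u\<in>DA. B (A u) = u)"
  shows "top_iso \<Gamma>0 {v\<in>adj_dom DT T. adj DT T v = 0} (antidual K ipK)
           (graph_norm DT T) (dual_norm K ipK)
       \<and> top_iso (\<lambda>v. (adj DT T v, \<Gamma>0 v)) (adj_dom DT T) (UNIV \<times> antidual K ipK)
           (graph_norm DT T) (\<lambda>(h, f). sqrt ((norm h)\<^sup>2 + (dual_norm K ipK f)\<^sup>2))"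
proof -
  interpret K: sesq K ipK using own_hilbert_sesq[OF K_hilb] .
  interpret H: sesq H1 ip1 using own_hilbert_sesq[OF H1_hilb] .
  obtain B CB where Blin: "lin_on UNIV B" and CB: "\<And>x. norm (B x) \<le> CB * norm x"
    and BDA: "\<And>x. B x \<in> DA" and AB: "\<And>x. A (B x) = x" and BA: "\<And>u. u \<in> DA \<Longrightarrow> B (A u) = u"
    using A_inv by blast
  note dense = T_dense
  have DAH: "DA \<subseteq> H1" using DA_eq by blast
  have H1D: "H1 \<subseteq> adj_dom DT T" by (rule H1_sub)
  have DTDA: "DT \<subseteq> DA" using T_le_A unfolding op_le_def by blast
  have TA: "\<And>u. u \<in> DT \<Longrightarrow> T u = A u" using T_le_A unfolding op_le_def by blast
  have AS: "\<And>u. u \<in> DA \<Longrightarrow> A u = adj DT T u" using A_le_Tstar unfolding op_le_def by blast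
  have BH: "B x \<in> H1" for x using BDA DAH by blast
  have BD: "B x \<in> adj_dom DT T" for x using BH H1D by blast
  have SB: "adj DT T (B x) = x" for x using AS[OF BDA] AB by simp
  have BS: "B (adj DT T u) = u" if "u \<in> DA" for u using AS[OF that] BA[OF that] by simp
  have Badd: "B (x + y) = B x + B y" for x y using Blin unfolding lin_on_def by blast
  have Bscl: "B (c *\<^sub>C x) = c *\<^sub>C B x" for c x using Blin unfolding lin_on_def by blast
  have g0add: "\<gamma>0 (x + y) = \<gamma>0 x + \<gamma>0 y" if "x \<in> H1" "y \<in> H1" for x y
    using \<gamma>0_lin that unfolding lin_on_def by blast
  have g0scl: "\<gamma>0 (c *\<^sub>C x) = c *\<^sub>C \<gamma>0 x" if "x \<in> H1" for c x
    using \<gamma>0_lin that unfolding lin_on_def by blast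
  have g1add: "\<gamma>1 (x + y) = \<gamma>1 x + \<gamma>1 y" if "x \<in> H1" "y \<in> H1" for x y
    using \<gamma>1_lin that unfolding lin_on_def by blast
  have g1scl: "\<gamma>1 (c *\<^sub>C x) = c *\<^sub>C \<gamma>1 x" if "x \<in> H1" for c x
    using \<gamma>1_lin that unfolding lin_on_def by blast
  have g0K: "\<gamma>0 x \<in> K" if "x \<in> H1" for x using \<gamma>0_map that by blast
  have g1K: "\<gamma>1 x \<in> K" if "x \<in> H1" for x using \<gamma>1_map that by blast
  have g00: "\<gamma>0 0 = 0" using g0scl[OF H.V0, of 0] by (simp add: scaleC_zero_left)
  have g0diff: "\<gamma>0 (x - y) = \<gamma>0 x - \<gamma>0 y" if "x \<in> H1" "y \<in> H1" for x y
  proof -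
    have "\<gamma>0 (x - y) = \<gamma>0 (x + (-1) *\<^sub>C y)" by (simp only: scaleC_minus1 diff_conv_add_uminus)
    also have "\<dots> = \<gamma>0 x + (-1) *\<^sub>C \<gamma>0 y" using g0add g0scl that H.Vscale by simp
    finally show ?thesis by (simp only: scaleC_minus1 diff_conv_add_uminus)
  qed
  have DAsub: "csubspace DA"
    unfolding csubspace_def DA_eq using H.V0 g00 H.Vadd H.Vscale g0add g0scl
    by (simp add: scaleC_zero_right)
  have Sadd: "adj DT T (x + y) = adj DT T x + adj DT T y" if "x \<in> adj_dom DT T" "y \<in> adj_dom DT T" for x y
    using adj_add[OF dense that] by blast
  have Sdiff: "adj DT T (x - y) = adj DT T x - adj DT T y" if "x \<in> adj_dom DT T" "y \<in> adj_dom DT T" for x y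
    using adj_diff[OF dense that] by blast
  have Ddiff: "x - y \<in> adj_dom DT T" if "x \<in> adj_dom DT T" "y \<in> adj_dom DT T" for x y
    using adj_diff[OF dense that] by blast
  have Dadd: "x + y \<in> adj_dom DT T" if "x \<in> adj_dom DT T" "y \<in> adj_dom DT T" for x y
    using adj_add[OF dense that] by blast
  obtain CS where CS: "\<And>u. u \<in> H1 \<Longrightarrow> norm (adj DT T u) \<le> CS * ip_norm ip1 u" using Tstar_bdd by blast
  obtain C0 where C0: "\<And>u. u \<in> H1 \<Longrightarrow> ip_norm ipK (\<gamma>0 u) \<le> C0 * ip_norm ip1 u" using \<gamma>0_bdd by blast
  obtain C1 where C1: "\<And>u. u \<in> H1 \<Longrightarrow> ip_norm ipK (\<gamma>1 u) \<le> C1 * ip_norm ip1 u" using \<gamma>1_bdd by blast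
  define C0' where "C0' = max C0 1"
  have C0'p: "C0' > 0" unfolding C0'_def by simp
  have C0': "ip_norm ipK (\<gamma>0 u) \<le> C0' * ip_norm ip1 u" if "u \<in> H1" for u
  proof -
    have "ip_norm ipK (\<gamma>0 u) \<le> C0 * ip_norm ip1 u" using C0 that .
    also have "\<dots> \<le> C0' * ip_norm ip1 u" unfolding C0'_def using H.nm_nonneg[OF that]
      by (intro mult_right_mono) auto
    finally show ?thesis .
  qed
  have DAclosed: "l \<in> DA" if X: "\<forall>n. X n \<in> DA" and l: "l \<in> H1"
       and lim: "(\<lambda>n. ip_norm ip1 (X n - l)) \<longlonglongrightarrow> 0" for X l
  proof -
    have "ip_norm ipK (\<gamma>0 l) \<le> e" if e: "e > 0" for e
    proof -
      have "\<exists>M. \<forall>n\<ge>M. norm (ip_norm ip1 (X n - l) - 0) < e / C0'"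
        using lim e C0'p unfolding LIMSEQ_iff by simp
      then obtain M where M: "norm (ip_norm ip1 (X M - l) - 0) < e / C0'" by blast
      have XH: "X M \<in> H1" using X DAH by blast
      have g0X: "\<gamma>0 (X M) = 0" using X DA_eq by blast
      have "\<gamma>0 l = - \<gamma>0 (X M - l)" using g0diff[OF XH l] g0X by simp
      then have "ip_norm ipK (\<gamma>0 l) = ip_norm ipK (\<gamma>0 (X M - l))"
        using K.nm_minus g0K H.Vdiff XH l by metis
      also have "\<dots> \<le> C0' * ip_norm ip1 (X M - l)" using C0' H.Vdiff XH l by blast
      also have "\<dots> \<le> C0' * (e / C0')" using M C0'p by (intro mult_left_mono) auto
      also have "\<dots> = e" using C0'p by simp
      finally show ?thesis .
    qed
    then have "ip_norm ipK (\<gamma>0 l) \<le> 0" by (metis field_le_epsilon add_0)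
    then have "ip_norm ipK (\<gamma>0 l) = 0" using K.nm_nonneg[OF g0K[OF l]] by simp
    then have "\<gamma>0 l = 0" using K.nm_eq0 g0K[OF l] by blast
    then show ?thesis using l DA_eq by blast
  qed
  obtain CBH where CBH: "\<And>x. ip_norm ip1 (B x) \<le> CBH * norm x"
  proof -
    have "\<exists>C. \<forall>x. ip_norm ip1 (B x) \<le> C * norm x"
    proof (rule open_map_bound[where S = "adj DT T" and DA = DA and CS = CS])
      show "own_hilbert H1 ip1" by fact
      show "DA \<subseteq> H1" by fact
      show "csubspace DA" by fact
      show "l \<in> DA" if "\<forall>n. X n \<in> DA" "l \<in> H1" "(\<lambda>n. ip_norm ip1 (X n - l)) \<longlonglongrightarrow> 0" for X l
        using DAclosed that by blast
      show "adj DT T (x + y) = adj DT T x + adj DT T y" if "x \<in> H1" "y \<in> H1" for x y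
        using Sadd that H1D by blast
      show "adj DT T (x - y) = adj DT T x - adj DT T y" if "x \<in> H1" "y \<in> H1" for x y
        using Sdiff that H1D by blast
      show "norm (adj DT T u) \<le> CS * ip_norm ip1 u" if "u \<in> H1" for u using CS that .
      show "lin_on UNIV B" by fact
      show "B x \<in> DA" for x by (rule BDA)
      show "adj DT T (B x) = x" for x by (rule SB)
      show "B (adj DT T u) = u" if "u \<in> DA" for u using BS that .
    qed
    then show ?thesis using that by blast
  qed
  define CG where "CG = max C1 0 * max CBH 0"
  have CG0: "CG \<ge> 0" unfolding CG_def by simp
  have CGb: "ip_norm ipK (\<gamma>1 (B x)) \<le> CG * norm x" for x
  proof -
    have "ip_norm ipK (\<gamma>1 (B x)) \<le> C1 * ip_norm ip1 (B x)" by (rule C1[OF BH])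
    also have "\<dots> \<le> max C1 0 * ip_norm ip1 (B x)" using H.nm_nonneg[OF BH] by (intro mult_right_mono) auto
    also have "\<dots> \<le> max C1 0 * (max CBH 0 * norm x)"
    proof (rule mult_left_mono)
      have "CBH * norm x \<le> max CBH 0 * norm x" by (intro mult_right_mono) auto
      then show "ip_norm ip1 (B x) \<le> max CBH 0 * norm x" using CBH[of x] by linarith
    qed simp
    finally show ?thesis unfolding CG_def by (simp add: algebra_simps)
  qed
  obtain CT where CT: "\<And>u. u \<in> adj_dom DT T \<Longrightarrow> dual_norm K ipK (\<Gamma>0 u) \<le> CT * graph_norm DT T u"
    using \<Gamma>0_bdd by blast
  define CT' where "CT' = max CT 0"
  have CT'0: "CT' \<ge> 0" unfolding CT'_def by simp
  have CT': "dual_norm K ipK (\<Gamma>0 u) \<le> CT' * graph_norm DT T u" if "u \<in> adj_dom DT T" for u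
  proof -
    have "dual_norm K ipK (\<Gamma>0 u) \<le> CT * graph_norm DT T u" by (rule CT[OF that])
    also have "\<dots> \<le> CT' * graph_norm DT T u" unfolding CT'_def using gn_nonneg
      by (intro mult_right_mono) auto
    finally show ?thesis .
  qed
  have G0anti: "\<Gamma>0 u \<in> antidual K ipK" if "u \<in> adj_dom DT T" for u using \<Gamma>0_map that by blast
  have G0diff: "\<Gamma>0 (v - v') x = \<Gamma>0 v x - \<Gamma>0 v' x" if "v \<in> adj_dom DT T" "v' \<in> adj_dom DT T" for v v' x
  proof -
    have m: "(-1) *\<^sub>C v' \<in> adj_dom DT T" using adj_scale[OF dense that(2)] by blast
    have eq: "v - v' = v + (-1) *\<^sub>C v'" by (simp add: scaleC_minus1)
    have "\<Gamma>0 (v - v') x = \<Gamma>0 (v + (-1) *\<^sub>C v') x" by (simp only: eq)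
    also have "\<dots> = \<Gamma>0 v x + \<Gamma>0 ((-1) *\<^sub>C v') x" using \<Gamma>0_add that(1) m by blast
    also have "\<dots> = \<Gamma>0 v x - \<Gamma>0 v' x" using \<Gamma>0_scale that(2) by simp
    finally show ?thesis .
  qed
  have G0DA: "\<Gamma>0 u x = 0" if "u \<in> DA" for u x
  proof -
    have "u \<in> H1" "\<gamma>0 u = 0" using that DA_eq by auto
    then show ?thesis using \<Gamma>0_ext unfolding emb_def by simp
  qed
  have green: "cinner (adj DT T v) u - cinner v (adj DT T u) = - \<Gamma>0 v (\<gamma>1 u)"
    if v: "v \<in> adj_dom DT T" and u: "u \<in> DA" for v u
  proof -
    have uH: "u \<in> H1" using u DAH by blast
    have uD: "u \<in> adj_dom DT T" using uH H1D by blast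
    have g0u: "\<gamma>0 u = 0" using u DA_eq by blast
    define g where "g w = cinner (adj DT T w) u - cinner w (adj DT T u) + \<Gamma>0 w (\<gamma>1 u)" for w
    have gH: "g w = 0" if w: "w \<in> H1" for w
    proof -
      have "cinner (adj DT T w) u - cinner w (adj DT T u) = cinner (\<gamma>1 w) (\<gamma>0 u) - cinner (\<gamma>0 w) (\<gamma>1 u)"
        using lagrange w uH by blast
      also have "\<dots> = - cinner (\<gamma>0 w) (\<gamma>1 u)" using g0u by simp
      finally have "cinner (adj DT T w) u - cinner w (adj DT T u) = - cinner (\<gamma>0 w) (\<gamma>1 u)" .
      moreover have "\<Gamma>0 w (\<gamma>1 u) = cinner (\<gamma>0 w) (\<gamma>1 u)"
        using \<Gamma>0_ext w g1K[OF uH] unfolding emb_def by simp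
      ultimately show ?thesis unfolding g_def by simp
    qed
    define Kc where "Kc = norm u + norm (adj DT T u) + CT' * ip_norm ipK (\<gamma>1 u)"
    have Kc0: "Kc \<ge> 0" unfolding Kc_def using CT'0 K.nm_nonneg[OF g1K[OF uH]] by simp
    have glip: "cmod (g w - g w') \<le> graph_norm DT T (w - w') * Kc"
      if w: "w \<in> adj_dom DT T" and w': "w' \<in> adj_dom DT T" for w w'
    proof -
      define d where "d = w - w'"
      have dD: "d \<in> adj_dom DT T" unfolding d_def using Ddiff w w' by blast
      have Sd: "adj DT T d = adj DT T w - adj DT T w'" unfolding d_def using Sdiff w w' by blast
      have eqg: "g w - g w' = cinner (adj DT T d) u - cinner d (adj DT T u) + \<Gamma>0 d (\<gamma>1 u)"
        unfolding g_def Sd unfolding d_def using G0diff[OF w w'] by (simp add: cinner_diff_left)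
      have tri1: "cmod (cinner (adj DT T d) u - cinner d (adj DT T u) + \<Gamma>0 d (\<gamma>1 u))
          \<le> cmod (cinner (adj DT T d) u - cinner d (adj DT T u)) + cmod (\<Gamma>0 d (\<gamma>1 u))"
        by (rule norm_triangle_ineq)
      have tri2: "cmod (cinner (adj DT T d) u - cinner d (adj DT T u))
          \<le> cmod (cinner (adj DT T d) u) + cmod (cinner d (adj DT T u))"
        by (rule norm_triangle_ineq4)
      have "cmod (g w - g w') \<le> cmod (cinner (adj DT T d) u) + cmod (cinner d (adj DT T u)) + cmod (\<Gamma>0 d (\<gamma>1 u))"
        unfolding eqg using tri1 tri2 by linarith
      also have "\<dots> \<le> graph_norm DT T d * norm u + graph_norm DT T d * norm (adj DT T u)
                     + (CT' * graph_norm DT T d) * ip_norm ipK (\<gamma>1 u)"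
      proof (intro add_mono)
        show "cmod (cinner (adj DT T d) u) \<le> graph_norm DT T d * norm u"
          using cinner_cs[of "adj DT T d" u] mult_right_mono[OF gn_ge2[of DT T d] norm_ge_zero[of u]] by linarith
        show "cmod (cinner d (adj DT T u)) \<le> graph_norm DT T d * norm (adj DT T u)"
          using cinner_cs[of d "adj DT T u"] mult_right_mono[OF gn_ge1[of d DT T] norm_ge_zero[of "adj DT T u"]] by linarith
        have "cmod (\<Gamma>0 d (\<gamma>1 u)) \<le> dual_norm K ipK (\<Gamma>0 d) * ip_norm ipK (\<gamma>1 u)"
          by (rule dual_le[OF own_hilbert_sesq[OF K_hilb] G0anti[OF dD] g1K[OF uH]])
        also have "\<dots> \<le> (CT' * graph_norm DT T d) * ip_norm ipK (\<gamma>1 u)"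
          using CT'[OF dD] K.nm_nonneg[OF g1K[OF uH]] by (intro mult_right_mono) auto
        finally show "cmod (\<Gamma>0 d (\<gamma>1 u)) \<le> (CT' * graph_norm DT T d) * ip_norm ipK (\<gamma>1 u)" .
      qed
      also have "\<dots> = graph_norm DT T d * Kc" unfolding Kc_def by (simp add: algebra_simps)
      finally show ?thesis unfolding d_def .
    qed
    have "cmod (g v) \<le> e" if e: "e > 0" for e
    proof -
      have e': "e / (Kc + 1) > 0" using e Kc0 by simp
      obtain w where w: "w \<in> H1" "graph_norm DT T (v - w) < e / (Kc + 1)"
        using H1_graph_dense v e' by blast
      have wD: "w \<in> adj_dom DT T" using w H1D by blast
      have "cmod (g v) = cmod (g v - g w)" using gH[OF w(1)] by simp
      also have "\<dots> \<le> graph_norm DT T (v - w) * Kc" by (rule glip[OF v wD])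
      also have "\<dots> \<le> e / (Kc + 1) * Kc" using w(2) Kc0 by (intro mult_right_mono) auto
      also have "\<dots> \<le> e" using e Kc0 by (simp add: field_simps)
      finally show ?thesis .
    qed
    then have "cmod (g v) \<le> 0" by (metis field_le_epsilon add_0)
    then have "g v = 0" by simp
    then show ?thesis unfolding g_def by (simp add: algebra_simps)
  qed
  define Z where "Z = {v\<in>adj_dom DT T. adj DT T v = 0}"
  have Ksesq: "sesq K ipK" using own_hilbert_sesq[OF K_hilb] .
  have repr: "cinner v w = \<Gamma>0 v (\<gamma>1 (B w))" if v: "v \<in> Z" for v w
  proof -
    have vD: "v \<in> adj_dom DT T" and Sv: "adj DT T v = 0" using v Z_def by auto
    have "cinner (adj DT T v) (B w) - cinner v (adj DT T (B w)) = - \<Gamma>0 v (\<gamma>1 (B w))"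
      by (rule green[OF vD BDA])
    then show ?thesis unfolding Sv SB by simp
  qed
  have LB: "norm v \<le> CG * dual_norm K ipK (\<Gamma>0 v)" if v: "v \<in> Z" for v
  proof -
    have vD: "v \<in> adj_dom DT T" using v Z_def by auto
    have dn: "0 \<le> dual_norm K ipK (\<Gamma>0 v)" by (rule dual_nonneg[OF Ksesq G0anti[OF vD]])
    have "(norm v)\<^sup>2 = cmod (cinner v v)" unfolding cinner_self norm_of_real by simp
    also have "\<dots> = cmod (\<Gamma>0 v (\<gamma>1 (B v)))" using repr[OF v] by simp
    also have "\<dots> \<le> dual_norm K ipK (\<Gamma>0 v) * ip_norm ipK (\<gamma>1 (B v))"
      by (rule dual_le[OF Ksesq G0anti[OF vD] g1K[OF BH]])
    also have "\<dots> \<le> dual_norm K ipK (\<Gamma>0 v) * (CG * norm v)"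
      using CGb dn by (intro mult_left_mono) auto
    finally have h: "norm v * norm v \<le> (CG * dual_norm K ipK (\<Gamma>0 v)) * norm v"
      by (simp add: power2_eq_square algebra_simps)
    show ?thesis
    proof (cases "norm v = 0")
      case True then show ?thesis using CG0 dn by simp
    next
      case False
      then have "norm v > 0" by simp
      then show ?thesis using h by (simp add: mult_le_cancel_right)
    qed
  qed
  have Zzero: "v = v'" if "v \<in> Z" "v' \<in> Z" "\<Gamma>0 v = \<Gamma>0 v'" for v v'
  proof -
    have vD: "v \<in> adj_dom DT T" "v' \<in> adj_dom DT T" using that Z_def by auto
    have "v - v' \<in> Z" using Ddiff[OF vD] Sdiff[OF vD] that unfolding Z_def by simp
    moreover have "\<Gamma>0 (v - v') = (\<lambda>x. 0)" using G0diff[OF vD] that(3) by (simp add: fun_eq_iff)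
    ultimately have "norm (v - v') \<le> CG * dual_norm K ipK (\<lambda>x. 0)" using LB by metis
    moreover have "dual_norm K ipK (\<lambda>x. 0) \<le> 0" by (rule dual_least[OF Ksesq]) simp
    ultimately have "norm (v - v') \<le> 0" using CG0 by (metis mult_nonneg_nonpos order_trans)
    then show ?thesis by simp
  qed
  have SURJ: "\<exists>v\<in>Z. \<Gamma>0 v = \<phi>" if phi: "\<phi> \<in> antidual K ipK" for \<phi>
  proof -
    define l where "l w = \<phi> (\<gamma>1 (B w))" for w
    have p0: "\<phi> 0 = 0" using antidual_add[OF phi K.V0 K.V0] by simp
    have "\<exists>v. \<forall>w. cinner v w = l w"
    proof (rule riesz)
      show "l (x + y) = l x + l y" for x y
        unfolding l_def Badd g1add[OF BH BH] using antidual_add[OF phi g1K[OF BH] g1K[OF BH]] .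
      show "l (c *\<^sub>C x) = cnj c * l x" for c x
        unfolding l_def Bscl g1scl[OF BH] using antidual_scl[OF phi g1K[OF BH]] .
      show "cmod (l x) \<le> (dual_norm K ipK \<phi> * CG) * norm x" for x
      proof -
        have "cmod (l x) \<le> dual_norm K ipK \<phi> * ip_norm ipK (\<gamma>1 (B x))"
          unfolding l_def by (rule dual_le[OF Ksesq phi g1K[OF BH]])
        also have "\<dots> \<le> dual_norm K ipK \<phi> * (CG * norm x)"
          using CGb dual_nonneg[OF Ksesq phi] by (intro mult_left_mono) auto
        finally show ?thesis by (simp add: algebra_simps)
      qed
    qed
    then obtain v where v: "\<And>w. cinner v w = l w" by blast
    have vZ: "v \<in> Z"
    proof -
      have "\<forall>u\<in>DT. cinner (T u) v = cinner u 0"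
      proof
        fix u assume u: "u \<in> DT"
        have uDA: "u \<in> DA" using u DTDA by blast
        have "B (T u) = u" using TA[OF u] BA[OF uDA] by simp
        moreover have "\<gamma>1 u = 0" using u DT_ker by blast
        ultimately have "l (T u) = 0" unfolding l_def using p0 by simp
        then have "cinner v (T u) = 0" using v by simp
        then have "cinner (T u) v = 0" using cinner_commute[of v "T u"] by simp
        then show "cinner (T u) v = cinner u 0" by simp
      qed
      from adj_eqI[OF dense this] show ?thesis unfolding Z_def by blast
    qed
    have "\<Gamma>0 v = \<phi>"
    proof
      fix x
      show "\<Gamma>0 v x = \<phi> x"
      proof (cases "x \<in> K")
        case False
        have vD: "v \<in> adj_dom DT T" using vZ Z_def by auto
        show ?thesis using antidual_out[OF G0anti[OF vD] False] antidual_out[OF phi False] by simp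
      next
        case True
        obtain u where u: "u \<in> H1" "\<gamma>0 u = 0" "\<gamma>1 u = x" using \<gamma>_surj K.V0 True by blast
        have uDA: "u \<in> DA" using u DA_eq by blast
        have "B (adj DT T u) = u" by (rule BS[OF uDA])
        then have "cinner v (adj DT T u) = \<Gamma>0 v x" using repr[OF vZ, of "adj DT T u"] u by simp
        moreover have "cinner v (adj DT T u) = \<phi> x" using v[of "adj DT T u"] \<open>B (adj DT T u) = u\<close> u
          unfolding l_def by simp
        ultimately show ?thesis by simp
      qed
    qed
    then show ?thesis using vZ by blast
  qed
  have ZD: "v \<in> adj_dom DT T" "adj DT T v = 0" if "v \<in> Z" for v using that Z_def by auto
  have zeroZ: "0 \<in> Z"
  proof -
    have "\<forall>u\<in>DT. cinner (T u) 0 = cinner u 0" by simp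
    from adj_eqI[OF dense this] show ?thesis unfolding Z_def by blast
  qed
  have G00: "\<Gamma>0 0 = (\<lambda>x. 0)" using G0DA csubspace_zero[OF DAsub] by (simp add: fun_eq_iff)
  have img1: "\<Gamma>0 ` Z = antidual K ipK"
  proof
    show "\<Gamma>0 ` Z \<subseteq> antidual K ipK" using G0anti ZD by blast
    show "antidual K ipK \<subseteq> \<Gamma>0 ` Z" using SURJ by blast
  qed
  have part1: "top_iso \<Gamma>0 Z (antidual K ipK) (graph_norm DT T) (dual_norm K ipK)"
    unfolding top_iso_def
  proof (intro conjI)
    show "bij_betw \<Gamma>0 Z (antidual K ipK)"
      unfolding bij_betw_def using img1 Zzero by (auto intro: inj_onI)
    show "\<exists>C. \<forall>x\<in>Z. dual_norm K ipK (\<Gamma>0 x) \<le> C * graph_norm DT T x"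
      using CT' ZD by blast
    show "\<exists>C. \<forall>x\<in>Z. graph_norm DT T x \<le> C * dual_norm K ipK (\<Gamma>0 x)"
      using LB ZD gn_zero by metis
  qed
  define Phi where "Phi v = (adj DT T v, \<Gamma>0 v)" for v
  have part2: "top_iso Phi (adj_dom DT T) (UNIV \<times> antidual K ipK)
           (graph_norm DT T) (\<lambda>(h, f). sqrt ((norm h)\<^sup>2 + (dual_norm K ipK f)\<^sup>2))"
    unfolding top_iso_def
  proof (intro conjI)
    have inj: "inj_on Phi (adj_dom DT T)"
    proof (rule inj_onI)
      fix v v' assume v: "v \<in> adj_dom DT T" and v': "v' \<in> adj_dom DT T" and e: "Phi v = Phi v'"
      then have e1: "adj DT T v = adj DT T v'" and e2: "\<Gamma>0 v = \<Gamma>0 v'" unfolding Phi_def by auto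
      have "v - v' \<in> Z" using Ddiff[OF v v'] Sdiff[OF v v'] e1 unfolding Z_def by simp
      moreover have "\<Gamma>0 (v - v') = \<Gamma>0 0" using G0diff[OF v v'] e2 G00 by (simp add: fun_eq_iff)
      ultimately have "v - v' = 0" using Zzero zeroZ by blast
      then show "v = v'" by simp
    qed
    have img: "Phi ` adj_dom DT T = UNIV \<times> antidual K ipK"
    proof
      show "Phi ` adj_dom DT T \<subseteq> UNIV \<times> antidual K ipK" unfolding Phi_def using G0anti by auto
      show "UNIV \<times> antidual K ipK \<subseteq> Phi ` adj_dom DT T"
      proof
        fix p :: "'h \<times> ('k \<Rightarrow> complex)" assume "p \<in> UNIV \<times> antidual K ipK"
        then obtain h \<phi> where p: "p = (h, \<phi>)" and phi: "\<phi> \<in> antidual K ipK" by blast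
        obtain z where z: "z \<in> Z" "\<Gamma>0 z = \<phi>" using SURJ[OF phi] by blast
        define v where "v = B h + z"
        have vD: "v \<in> adj_dom DT T" unfolding v_def using Dadd[OF BD ZD(1)[OF z(1)]] .
        have "adj DT T v = h" unfolding v_def using Sadd[OF BD ZD(1)[OF z(1)]] SB ZD(2)[OF z(1)] by simp
        moreover have "\<Gamma>0 v = \<phi>"
        proof
          fix x
          have "\<Gamma>0 v x = \<Gamma>0 (B h) x + \<Gamma>0 z x" unfolding v_def using \<Gamma>0_add BD ZD(1)[OF z(1)] by blast
          then show "\<Gamma>0 v x = \<phi> x" using G0DA[OF BDA] z(2) by simp
        qed
        ultimately have "Phi v = p" unfolding Phi_def p by simp
        then show "p \<in> Phi ` adj_dom DT T" using vD by blast
      qed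
    qed
    show "bij_betw Phi (adj_dom DT T) (UNIV \<times> antidual K ipK)"
      unfolding bij_betw_def using inj img by blast
    show "\<exists>C. \<forall>x\<in>adj_dom DT T. (\<lambda>(h, f). sqrt ((norm h)\<^sup>2 + (dual_norm K ipK f)\<^sup>2)) (Phi x)
            \<le> C * graph_norm DT T x"
    proof (intro exI[of _ "1 + CT'"] ballI)
      fix v assume v: "v \<in> adj_dom DT T"
      have dn: "0 \<le> dual_norm K ipK (\<Gamma>0 v)" by (rule dual_nonneg[OF Ksesq G0anti[OF v]])
      have "sqrt ((norm (adj DT T v))\<^sup>2 + (dual_norm K ipK (\<Gamma>0 v))\<^sup>2)
            \<le> norm (adj DT T v) + dual_norm K ipK (\<Gamma>0 v)"
        using dn by (intro sqrt_sum_squares_le_sum) auto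
      also have "\<dots> \<le> graph_norm DT T v + CT' * graph_norm DT T v"
        using gn_ge2[of DT T v] CT'[OF v] by linarith
      also have "\<dots> = (1 + CT') * graph_norm DT T v" by (simp add: algebra_simps)
      finally show "(\<lambda>(h, f). sqrt ((norm h)\<^sup>2 + (dual_norm K ipK f)\<^sup>2)) (Phi v) \<le> (1 + CT') * graph_norm DT T v"
        unfolding Phi_def by simp
    qed
    show "\<exists>C. \<forall>x\<in>adj_dom DT T. graph_norm DT T x
            \<le> C * (\<lambda>(h, f). sqrt ((norm h)\<^sup>2 + (dual_norm K ipK f)\<^sup>2)) (Phi x)"
    proof (intro exI[of _ "max CB 0 + 1 + CG"] ballI)
      fix v assume v: "v \<in> adj_dom DT T"
      define h where "h = adj DT T v"
      define r where "r = sqrt ((norm h)\<^sup>2 + (dual_norm K ipK (\<Gamma>0 v))\<^sup>2)"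
      have dn: "0 \<le> dual_norm K ipK (\<Gamma>0 v)" by (rule dual_nonneg[OF Ksesq G0anti[OF v]])
      have hr: "norm h \<le> r" unfolding r_def by simp
      have dr: "dual_norm K ipK (\<Gamma>0 v) \<le> r" unfolding r_def by simp
      define z where "z = v - B h"
      have zD: "z \<in> adj_dom DT T" unfolding z_def by (rule Ddiff[OF v BD])
      have "adj DT T z = 0" unfolding z_def h_def using Sdiff[OF v BD] SB by simp
      then have zZ: "z \<in> Z" using zD Z_def by simp
      have "\<Gamma>0 z = \<Gamma>0 v" unfolding z_def using G0diff[OF v BD] G0DA[OF BDA] by (simp add: fun_eq_iff)
      then have nz: "norm z \<le> CG * dual_norm K ipK (\<Gamma>0 v)" using LB[OF zZ] by simp
      have nB: "norm (B h) \<le> max CB 0 * norm h"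
        using CB[of h] by (meson max.cobounded1 mult_right_mono norm_ge_zero order_trans)
      have "v = B h + z" unfolding z_def by simp
      then have "norm v \<le> norm (B h) + norm z" by (metis norm_triangle_ineq)
      then have "graph_norm DT T v \<le> max CB 0 * norm h + CG * dual_norm K ipK (\<Gamma>0 v) + norm h"
        using gn_le[of DT T v] nB nz unfolding h_def by linarith
      also have "\<dots> \<le> max CB 0 * r + CG * r + r"
        using hr dr CG0 by (intro add_mono mult_left_mono) auto
      also have "\<dots> = (max CB 0 + 1 + CG) * r" by (simp add: algebra_simps)
      finally show "graph_norm DT T v \<le> (max CB 0 + 1 + CG) * (\<lambda>(h, f). sqrt ((norm h)\<^sup>2 + (dual_norm K ipK f)\<^sup>2)) (Phi v)"
        unfolding Phi_def r_def h_def by simp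
    qed
  qed
  show ?thesis using part1 part2 unfolding Z_def Phi_def by blast
qed

end
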